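(* If $n$ and $m$ are sufficiently large, the bounded-error randomized query complexity of $h_{1,n,m}$ satisfies $R(h_{1,n,m})=\Omega\!\left(\frac{nm}{\log m}\right)$.
   Context: Let $n,m$ be positive integers, $M=[n]\times[m]$ (a grid of cells with $n$ rows and $m$ columns), $\tilde M=M\cup\{\bot\}$ (pointers to cells, $\bot$ the null pointer). Let $T$ be the following fixed binary tree with $m$ leaves and $m-1$ internal nodes: if $m=2^r$, $T$ is the complete binary tree with $2^r$ leaves; if $2^r<m<2^{r+1}$, take the complete binary tree with $2^r$ leaves and add a pair of children to each of its $m-2^r$ leftmost leaves. Outgoing arcs are labeled 'left'/'right', leaves labeled $1,\dots,m$ from left to right, and $T(j)$ is the sequence of labels on the root-to-leaf-$j$ path. The alphabet is $\Sigma=\{0,1\}\times\tilde M\times\tilde M\times\tilde M$ with components $\mathrm{val},\mathrm{lpoint},\mathrm{rpoint},\mathrm{ipoint}$. The function $h_{1,n,m}\colon\Sigma^M\to\{0,1\}$ has $h_{1,n,m}(x)=1$ iff: (1) there is exactly one column $b$ with $\mathrm{val}(x_{i,b})=1$ for all $i\in[n]$ (marked column); (2) column $b$ contains a unique cell $a$ with $x_{a}\ne(1,\bot,\bot,\bot)$ (special element); (3) $\mathrm{ipoint}(x_{a})=a$; (4) for each column $j\ne b$, the path starting at $a$ and following $\mathrm{lpoint},\mathrm{rpoint}$ as specified by $T(j)$ exists (no $\bot$ on it) and ends at a cell $\ell_j$ in column $j$ with $\mathrm{val}(x_{\ell_j})=0$. A query returns the symbol $x_c\in\Sigma$ of one cell.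 $R(f)$ is the minimum worst-case expected number of queries of a randomized decision tree that outputs $f(x)$ with probability at least $9/10$ on every input $x$. *)

theory Defs
  imports "HOL-Probability.Probability"
begin

datatype ('c, 's) dtree = Out bool | Query 'c "'s \<Rightarrow> ('c, 's) dtree"

primrec dt_eval :: "('c, 's) dtree \<Rightarrow> ('c \<Rightarrow> 's) \<Rightarrow> bool" where
  "dt_eval (Out b) x = b"
| "dt_eval (Query c f) x = dt_eval (f (x c)) x"

primrec dt_cost :: "('c, 's) dtree \<Rightarrow> ('c \<Rightarrow> 's) \<Rightarrow> nat" where
  "dt_cost (Out b) x = 0"
| "dt_cost (Query c f) x = Suc (dt_cost (f (x c)) x)"

definition rdt_correct ::
  "('c \<Rightarrow> 's) set \<Rightarrow> (('c \<Rightarrow> 's) \<Rightarrow> bool) \<Rightarrow> ('c, 's) dtree pmf \<Rightarrow> bool" where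
  "rdt_correct X f D \<longleftrightarrow>
     (\<forall>x\<in>X. measure_pmf.prob D {t. dt_eval t x = f x} \<ge> 9/10)"

definition rdt_cost :: "('c \<Rightarrow> 's) set \<Rightarrow> ('c, 's) dtree pmf \<Rightarrow> ennreal" where
  "rdt_cost X D = (SUP x\<in>X. \<integral>\<^sup>+ t. ennreal (real (dt_cost t x)) \<partial>(measure_pmf D))"

definition R_query :: "('c \<Rightarrow> 's) set \<Rightarrow> (('c \<Rightarrow> 's) \<Rightarrow> bool) \<Rightarrow> ennreal" where
  "R_query X f = (INF D\<in>{D. rdt_correct X f D}. rdt_cost X D)"

datatype btree = Leaf | Node btree btree
datatype dir = Left | Right

primrec nleaves :: "btree \<Rightarrow> nat" where
  "nleaves Leaf = 1"
| "nleaves (Node l r) = nleaves l + nleaves r"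

primrec complete_tree :: "nat \<Rightarrow> btree" where
  "complete_tree 0 = Leaf"
| "complete_tree (Suc r) = Node (complete_tree r) (complete_tree r)"

primrec grow :: "nat \<Rightarrow> btree \<Rightarrow> btree" where
  "grow k Leaf = (if k > 0 then Node Leaf Leaf else Leaf)"
| "grow k (Node l r) = Node (grow k l) (grow (k - nleaves l) r)"

primrec leaf_paths :: "btree \<Rightarrow> dir list list" where
  "leaf_paths Leaf = [[]]"
| "leaf_paths (Node l r) = map (Cons Left) (leaf_paths l) @ map (Cons Right) (leaf_paths r)"

definition tree_T :: "nat \<Rightarrow> btree" where
  "tree_T m = (let r = (THE r. 2 ^ r \<le> m \<and> m < 2 ^ Suc r)
               in grow (m - 2 ^ r) (complete_tree r))"

text \<open>T(j), for leaves labelled 1..m from left to right.\<close>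
definition T_path :: "nat \<Rightarrow> nat \<Rightarrow> dir list" where
  "T_path m j = leaf_paths (tree_T m) ! (j - 1)"

type_synonym cell = "nat \<times> nat"   \<comment> \<open>(row, column)\<close>
type_synonym sym = "bool \<times> cell option \<times> cell option \<times> cell option"
  \<comment> \<open>(val, lpoint, rpoint, ipoint); None is the null pointer\<close>

definition val :: "sym \<Rightarrow> bool" where "val s = fst s"
definition lpoint :: "sym \<Rightarrow> cell option" where "lpoint s = fst (snd s)"
definition rpoint :: "sym \<Rightarrow> cell option" where "rpoint s = fst (snd (snd s))"
definition ipoint :: "sym \<Rightarrow> cell option" where "ipoint s = snd (snd (snd s))"

definition grid :: "nat \<Rightarrow> nat \<Rightarrow> cell set" where
  "grid n m = {1..n} \<times> {1..m}"

definition valid_sym :: "nat \<Rightarrow> nat \<Rightarrow> sym \<Rightarrow> bool" where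
  "valid_sym n m s \<longleftrightarrow>
     set_option (lpoint s) \<subseteq> grid n m \<and> set_option (rpoint s) \<subseteq> grid n m \<and>
     set_option (ipoint s) \<subseteq> grid n m"

text \<open>Inputs x in Sigma^M, represented as functions on cells that are valid on
the grid and a fixed dummy value outside it.\<close>
definition inputs :: "nat \<Rightarrow> nat \<Rightarrow> (cell \<Rightarrow> sym) set" where
  "inputs n m = {x. (\<forall>c\<in>grid n m. valid_sym n m (x c)) \<and>
                    (\<forall>c. c \<notin> grid n m \<longrightarrow> x c = (False, None, None, None))}"

primrec follow :: "(cell \<Rightarrow> sym) \<Rightarrow> cell \<Rightarrow> dir list \<Rightarrow> cell option" where
  "follow x c [] = Some c"
| "follow x c (d # ds) =
     (case (if d = Left then lpoint (x c) else rpoint (x c)) of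
        None \<Rightarrow> None
      | Some c' \<Rightarrow> follow x c' ds)"

definition marked_col :: "nat \<Rightarrow> (cell \<Rightarrow> sym) \<Rightarrow> nat \<Rightarrow> bool" where
  "marked_col n x b \<longleftrightarrow> (\<forall>i\<in>{1..n}. val (x (i, b)))"

definition h1 :: "nat \<Rightarrow> nat \<Rightarrow> (cell \<Rightarrow> sym) \<Rightarrow> bool" where
  "h1 n m x \<longleftrightarrow>
    (\<exists>b\<in>{1..m}. marked_col n x b \<and> (\<forall>b'\<in>{1..m}. marked_col n x b' \<longrightarrow> b' = b) \<and>
      (\<exists>a\<in>grid n m. snd a = b \<and> x a \<noteq> (True, None, None, None) \<and>
         (\<forall>a'\<in>grid n m. snd a' = b \<and> x a' \<noteq> (True, None, None, None) \<longrightarrow> a' = a) \<and>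
         ipoint (x a) = Some a \<and>
         (\<forall>j\<in>{1..m}. j \<noteq> b \<longrightarrow>
            (\<exists>l. follow x a (T_path m j) = Some l \<and> snd l = j \<and> \<not> val (x l)))))"

end

theory Submission
  imports Defs "HOL-Library.Sublist"
begin

section \<open>Tree lemmas\<close>

lemma length_leaf_paths[simp]: "length (leaf_paths t) = nleaves t"
  by (induction t) auto

lemma nleaves_pos: "nleaves t \<ge> 1"
  by (induction t) auto

lemma leaf_paths_ne: "leaf_paths t \<noteq> []"
  using length_leaf_paths[of t] nleaves_pos[of t] by (metis list.size(3) not_one_le_zero)

lemma distinct_leaf_paths: "distinct (leaf_paths t)"
  by (induction t) (auto simp: distinct_map inj_on_def)

lemma prefix_free_leaf_paths:
  "p \<in> set (leaf_paths t) \<Longrightarrow> q \<in> set (leaf_paths t) \<Longrightarrow> prefix p q \<Longrightarrow> p = q"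
proof (induction t arbitrary: p q)
  case Leaf then show ?case by auto
next
  case (Node l r)
  from Node.prems(1,2) consider
      p' q' where "p = Left # p'" "q = Left # q'" "p' \<in> set (leaf_paths l)" "q' \<in> set (leaf_paths l)"
    | p' q' where "p = Right # p'" "q = Right # q'" "p' \<in> set (leaf_paths r)" "q' \<in> set (leaf_paths r)"
    | p' q' where "p = Left # p'" "q = Right # q'"
    | p' q' where "p = Right # p'" "q = Left # q'"
    by auto
  then show ?case
  proof cases
    case 1 then show ?thesis using Node.IH(1)[of p' q'] Node.prems(3) by auto
  next
    case 2 then show ?thesis using Node.IH(2)[of p' q'] Node.prems(3) by auto
  qed (use Node.prems(3) in auto)
qed

definition INN :: "btree \<Rightarrow> dir list set" where
  "INN t = {u. \<exists>p\<in>set (leaf_paths t). strict_prefix u p}"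

lemma INN_Leaf[simp]: "INN Leaf = {}"
  by (auto simp: INN_def)

lemma INN_Node: "INN (Node l r) = insert [] (Cons Left ` INN l \<union> Cons Right ` INN r)"
proof -
  have a: "leaf_paths l \<noteq> []" "leaf_paths r \<noteq> []" by (rule leaf_paths_ne)+
  show ?thesis
  proof (rule set_eqI, rule iffI)
    fix u assume "u \<in> INN (Node l r)"
    then obtain p where p: "p \<in> set (leaf_paths (Node l r))" "strict_prefix u p"
      unfolding INN_def by blast
    show "u \<in> insert [] (Cons Left ` INN l \<union> Cons Right ` INN r)"
    proof (cases u)
      case Nil then show ?thesis by simp
    next
      case (Cons d u')
      from p(1) consider p' where "p = Left # p'" "p' \<in> set (leaf_paths l)"
        | p' where "p = Right # p'" "p' \<in> set (leaf_paths r)" by auto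
      then show ?thesis
      proof cases
        case 1
        with p(2) Cons have "d = Left" "strict_prefix u' p'" by (auto simp: strict_prefix_def)
        with 1 Cons show ?thesis unfolding INN_def by blast
      next
        case 2
        with p(2) Cons have "d = Right" "strict_prefix u' p'" by (auto simp: strict_prefix_def)
        with 2 Cons show ?thesis unfolding INN_def by blast
      qed
    qed
  next
    fix u assume u: "u \<in> insert [] (Cons Left ` INN l \<union> Cons Right ` INN r)"
    show "u \<in> INN (Node l r)"
    proof (cases "u = []")
      case True
      obtain p where "p \<in> set (leaf_paths l)" using a by (cases "leaf_paths l") auto
      then show ?thesis using True unfolding INN_def
        by (auto intro!: bexI[of _ "Left # p"])
    next
      case False
      with u consider u' where "u = Left # u'" "u' \<in> INN l" | u' where "u = Right # u'" "u' \<in> INN r"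
        by blast
      then show ?thesis
      proof cases
        case 1
        then obtain p where "p \<in> set (leaf_paths l)" "strict_prefix u' p" unfolding INN_def by blast
        then show ?thesis using 1 unfolding INN_def by (auto intro!: bexI[of _ "Left # p"])
      next
        case 2
        then obtain p where "p \<in> set (leaf_paths r)" "strict_prefix u' p" unfolding INN_def by blast
        then show ?thesis using 2 unfolding INN_def by (auto intro!: bexI[of _ "Right # p"])
      qed
    qed
  qed
qed

lemma finite_INN: "finite (INN t)"
  by (induction t) (auto simp: INN_Node)

lemma card_INN: "card (INN t) \<le> nleaves t - 1"
proof (induction t)
  case Leaf then show ?case by simp
next
  case (Node l r)
  have "card (INN (Node l r)) \<le> Suc (card (Cons Left ` INN l \<union> Cons Right ` INN r))"
    unfolding INN_Node by (rule card_insert_le_m1) auto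
  also have "\<dots> \<le> Suc (card (Cons Left ` INN l) + card (Cons Right ` INN r))"
    by (simp add: card_Un_le)
  also have "\<dots> \<le> Suc (card (INN l) + card (INN r))"
    by (simp add: card_image_le finite_INN add_mono)
  also have "\<dots> \<le> nleaves (Node l r) - 1"
    using Node nleaves_pos[of l] nleaves_pos[of r] by simp
  finally show ?case .
qed

lemma INN_child:
  assumes "u \<in> INN t"
  shows "\<exists>p\<in>set (leaf_paths t). prefix (u @ [d]) p"
  using assms
proof (induction t arbitrary: u)
  case Leaf then show ?case by simp
next
  case (Node l r)
  have a: "leaf_paths l \<noteq> []" "leaf_paths r \<noteq> []" by (rule leaf_paths_ne)+
  from Node.prems consider "u = []" | u' where "u = Left # u'" "u' \<in> INN l"
    | u' where "u = Right # u'" "u' \<in> INN r"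
    unfolding INN_Node by blast
  then show ?case
  proof cases
    case 1
    obtain p where p: "p \<in> set (leaf_paths l)" using a by (cases "leaf_paths l") auto
    obtain q where q: "q \<in> set (leaf_paths r)" using a by (cases "leaf_paths r") auto
    show ?thesis using 1 p q by (cases d) (auto intro: bexI[of _ "Left # p"] bexI[of _ "Right # q"])
  next
    case 2
    with Node.IH(1)[of u'] obtain p where "p \<in> set (leaf_paths l)" "prefix (u' @ [d]) p" by auto
    then show ?thesis using 2 by (auto intro!: bexI[of _ "Left # p"])
  next
    case 3
    with Node.IH(2)[of u'] obtain p where "p \<in> set (leaf_paths r)" "prefix (u' @ [d]) p" by auto
    then show ?thesis using 3 by (auto intro!: bexI[of _ "Right # p"])
  qed
qed

lemma INN_leaf_disjoint: "p \<in> set (leaf_paths t) \<Longrightarrow> p \<notin> INN t"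
  unfolding INN_def using prefix_free_leaf_paths strict_prefix_def by blast

primrec height :: "btree \<Rightarrow> nat" where
  "height Leaf = 0"
| "height (Node l r) = Suc (max (height l) (height r))"

lemma leaf_paths_length: "p \<in> set (leaf_paths t) \<Longrightarrow> length p \<le> height t"
  by (induction t arbitrary: p) (auto, fastforce+)

lemma nleaves_grow: "nleaves (grow k t) = nleaves t + min k (nleaves t)"
  by (induction t arbitrary: k) auto

lemma height_grow: "height (grow k t) \<le> Suc (height t)"
proof (induction t arbitrary: k)
  case (Node l r)
  show ?case using Node.IH[of k] Node.IH(2)[of "k - nleaves l"] by (simp add: max_def)
qed simp

lemma nleaves_complete[simp]: "nleaves (complete_tree r) = 2 ^ r"
  by (induction r) auto

lemma height_complete[simp]: "height (complete_tree r) = r"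
  by (induction r) auto

lemma tree_T_props:
  assumes "m \<ge> 2"
  shows "\<exists>r. 2 ^ r \<le> m \<and> nleaves (tree_T m) = m \<and> height (tree_T m) \<le> Suc r \<and>
             (\<exists>l rr. tree_T m = Node l rr)"
proof -
  obtain r where r: "2 ^ r \<le> m" "m < 2 ^ Suc r"
    using ex_power_ivl1[of 2 m] assms by auto
  have the: "(THE r. 2 ^ r \<le> m \<and> m < 2 ^ Suc r) = r"
  proof (rule the_equality)
    show "2 ^ r \<le> m \<and> m < 2 ^ Suc r" using r by simp
  next
    fix r' assume r': "2 ^ r' \<le> m \<and> m < 2 ^ Suc r'"
    show "r' = r"
    proof (rule ccontr)
      assume "r' \<noteq> r"
      then consider "r' < r" | "r < r'" by linarith
      then show False
      proof cases
        case 1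
        then have "(2::nat) ^ Suc r' \<le> 2 ^ r" by (intro power_increasing) auto
        with r r' show False by linarith
      next
        case 2
        then have "(2::nat) ^ Suc r \<le> 2 ^ r'" by (intro power_increasing) auto
        with r r' show False by linarith
      qed
    qed
  qed
  have T: "tree_T m = grow (m - 2 ^ r) (complete_tree r)"
    unfolding tree_T_def the Let_def ..
  have "r \<ge> 1"
  proof (rule ccontr)
    assume "\<not> r \<ge> 1" then have "r = 0" by simp
    with r assms show False by simp
  qed
  then obtain r0 where r0: "r = Suc r0" by (cases r) auto
  have node: "\<exists>l rr. tree_T m = Node l rr" unfolding T r0 by simp
  have "nleaves (tree_T m) = m" unfolding T nleaves_grow using r by auto
  moreover have "height (tree_T m) \<le> Suc r" unfolding T using height_grow[of _ "complete_tree r"] by simp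
  ultimately show ?thesis using r node by blast
qed

section \<open>Query lists\<close>

primrec qlist :: "('c, 's) dtree \<Rightarrow> ('c \<Rightarrow> 's) \<Rightarrow> 'c list" where
  "qlist (Out b) x = []"
| "qlist (Query c f) x = c # qlist (f (x c)) x"

lemma length_qlist: "length (qlist t x) = dt_cost t x"
  by (induction t) auto

fun cut :: "'c set \<Rightarrow> 'c list \<Rightarrow> 'c list" where
  "cut D [] = []"
| "cut D (c # l) = (if c \<in> D then [c] else c # cut D l)"

lemma set_cut: "set (cut D l) \<subseteq> set l"
  by (induction l) auto

lemma agree_cut:
  assumes "\<And>z. z \<notin> D \<Longrightarrow> x z = y z"
  shows "cut D (qlist t x) = cut D (qlist t y)"
  using assms by (induction t) auto

lemma agree_eval:
  assumes "\<And>z. z \<notin> D \<Longrightarrow> x z = y z" "set (qlist t x) \<inter> D = {}"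
  shows "dt_eval t x = dt_eval t y"
  using assms by (induction t) auto

lemma L1: "c \<in> set (takeWhile (\<lambda>z. z \<noteq> p) l) \<Longrightarrow> c \<in> set (cut {c, p} l)"
  by (induction l) auto

lemma L2: "c \<in> set l \<Longrightarrow> c \<in> set (cut {c} l)"
  by (induction l) auto

lemma L3: "x \<in> set l \<Longrightarrow> x \<notin> set (takeWhile (\<lambda>z. z \<noteq> p) l) \<Longrightarrow> p \<in> set l"
  by (induction l) (auto split: if_splits)

lemma L4: "p \<in> set l \<Longrightarrow> c \<notin> set (takeWhile (\<lambda>z. z \<noteq> p) l) \<Longrightarrow> p \<in> set (cut {c, p} l)"
  by (induction l) auto

lemma L5: "c \<notin> set (takeWhile (\<lambda>z. z \<noteq> p) l) \<Longrightarrow>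
    set (takeWhile (\<lambda>z. z \<noteq> p) l) \<subseteq> set (cut {c, p} l)"
  by (induction l) auto

lemma L6: "c \<in> set (takeWhile (\<lambda>z. z \<noteq> p) l) \<Longrightarrow>
    set (takeWhile (\<lambda>z. z \<noteq> c) (takeWhile (\<lambda>z. z \<noteq> p) l)) \<union> {c} \<subseteq> set (cut {c, p} l)"
  by (induction l) auto

lemma rank_sum:
  "2 * (\<Sum>c\<in>set xs \<inter> X. card ((set (takeWhile (\<lambda>z. z \<noteq> c) xs) \<union> {c}) \<inter> X))
     = card (set xs \<inter> X) * (card (set xs \<inter> X) + 1)"
proof (induction xs rule: rev_induct)
  case Nil then show ?case by simp
next
  case (snoc y xs)
  have eq: "\<And>c. c \<in> set xs \<Longrightarrow> takeWhile (\<lambda>z. z \<noteq> c) (xs @ [y]) = takeWhile (\<lambda>z. z \<noteq> c) xs"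
    by (rule takeWhile_append1) auto
  show ?case
  proof (cases "y \<in> X \<and> y \<notin> set xs")
    case False
    then have S: "set (xs @ [y]) \<inter> X = set xs \<inter> X" by auto
    have "(\<Sum>c\<in>set (xs @ [y]) \<inter> X. card ((set (takeWhile (\<lambda>z. z \<noteq> c) (xs @ [y])) \<union> {c}) \<inter> X))
        = (\<Sum>c\<in>set xs \<inter> X. card ((set (takeWhile (\<lambda>z. z \<noteq> c) xs) \<union> {c}) \<inter> X))"
      unfolding S by (rule sum.cong) (auto simp: eq)
    then show ?thesis using snoc S by simp
  next
    case True
    then have S: "set (xs @ [y]) \<inter> X = insert y (set xs \<inter> X)" by auto
    have fin: "finite (set xs \<inter> X)" by simp
    have ty: "takeWhile (\<lambda>z. z \<noteq> y) (xs @ [y]) = xs"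
      using True by (subst takeWhile_append2) auto
    have "(\<Sum>c\<in>set (xs @ [y]) \<inter> X. card ((set (takeWhile (\<lambda>z. z \<noteq> c) (xs @ [y])) \<union> {c}) \<inter> X))
        = card ((set xs \<union> {y}) \<inter> X) +
          (\<Sum>c\<in>set xs \<inter> X. card ((set (takeWhile (\<lambda>z. z \<noteq> c) (xs @ [y])) \<union> {c}) \<inter> X))"
      unfolding S using True fin by (simp add: ty)
    also have "(\<Sum>c\<in>set xs \<inter> X. card ((set (takeWhile (\<lambda>z. z \<noteq> c) (xs @ [y])) \<union> {c}) \<inter> X))
        = (\<Sum>c\<in>set xs \<inter> X. card ((set (takeWhile (\<lambda>z. z \<noteq> c) xs) \<union> {c}) \<inter> X))"
      by (rule sum.cong) (auto simp: eq)
    also have "(set xs \<union> {y}) \<inter> X = insert y (set xs \<inter> X)" using True by auto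
    finally have "2 * (\<Sum>c\<in>set (xs @ [y]) \<inter> X. card ((set (takeWhile (\<lambda>z. z \<noteq> c) (xs @ [y])) \<union> {c}) \<inter> X))
      = 2 * card (insert y (set xs \<inter> X)) + card (set xs \<inter> X) * (card (set xs \<inter> X) + 1)"
      using snoc by simp
    moreover have "card (insert y (set xs \<inter> X)) = card (set xs \<inter> X) + 1" using True fin by simp
    ultimately show ?thesis unfolding S by (simp add: algebra_simps)
  qed
qed

lemma rank_ineq:
  fixes g :: "'c \<Rightarrow> nat"
  assumes X: "finite X" "set xs \<inter> X \<subseteq> X"
    and g1: "\<And>c. c \<in> set xs \<inter> X \<Longrightarrow> card ((set (takeWhile (\<lambda>z. z \<noteq> c) xs) \<union> {c}) \<inter> X) \<le> g c"
    and g2: "\<And>c. c \<in> X - set xs \<Longrightarrow> card (set xs \<inter> X) \<le> g c"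
  shows "card X * card (set xs \<inter> X) \<le> 2 * (\<Sum>c\<in>X. g c)"
proof -
  define A where "A = set xs \<inter> X"
  define k where "k = card A"
  have AX: "A \<subseteq> X" unfolding A_def by auto
  have kN: "k \<le> card X" unfolding k_def using AX X(1) card_mono by blast
  have split: "(\<Sum>c\<in>X. g c) = (\<Sum>c\<in>A. g c) + (\<Sum>c\<in>X - A. g c)"
    using AX X(1) by (metis add.commute sum.subset_diff)
  have s1: "k * (k + 1) \<le> 2 * (\<Sum>c\<in>A. g c)"
  proof -
    have "k * (k + 1) = 2 * (\<Sum>c\<in>A. card ((set (takeWhile (\<lambda>z. z \<noteq> c) xs) \<union> {c}) \<inter> X))"
      unfolding k_def A_def by (rule rank_sum[symmetric])
    also have "\<dots> \<le> 2 * (\<Sum>c\<in>A. g c)"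
      using g1 unfolding A_def by (intro mult_le_mono2 sum_mono) auto
    finally show ?thesis .
  qed
  have s2: "(card X - k) * k \<le> (\<Sum>c\<in>X - A. g c)"
  proof -
    have "(\<Sum>c\<in>X - A. k) \<le> (\<Sum>c\<in>X - A. g c)"
      using g2 unfolding A_def k_def by (intro sum_mono) auto
    moreover have "card (X - A) = card X - k"
      unfolding k_def using AX X(1) by (simp add: card_Diff_subset finite_subset)
    ultimately show ?thesis by simp
  qed
  have "card X * k \<le> k * (k + 1) + 2 * ((card X - k) * k)"
  proof -
    obtain d where d: "card X = k + d" using kN le_Suc_ex by blast
    show ?thesis unfolding d by (simp add: algebra_simps)
  qed
  also have "\<dots> \<le> 2 * (\<Sum>c\<in>X. g c)" using s1 s2 split by linarith
  finally show ?thesis unfolding k_def A_def .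
qed

section \<open>Construction of inputs\<close>

definition LP :: "nat \<Rightarrow> dir list list" where "LP m = leaf_paths (tree_T m)"
definition IN :: "nat \<Rightarrow> dir list set" where "IN m = INN (tree_T m)"
definition colof :: "nat \<Rightarrow> dir list \<Rightarrow> nat" where
  "colof m q = (THE j. j \<in> {1..m} \<and> T_path m j = q)"

definition blank :: sym where "blank = (True, None, None, None)"
definition zero :: sym where "zero = (False, None, None, None)"

definition ptr :: "nat \<Rightarrow> (nat \<Rightarrow> nat option) \<Rightarrow> dir list set \<Rightarrow> (dir list \<Rightarrow> cell) \<Rightarrow> dir list \<Rightarrow> cell option" where
  "ptr m lr J \<phi> q = (if q \<in> set (LP m) then map_option (\<lambda>i. (i, colof m q)) (lr (colof m q))
                     else if q \<in> J then Some (\<phi> q) else None)"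

definition nodeof :: "dir list set \<Rightarrow> (dir list \<Rightarrow> cell) \<Rightarrow> cell \<Rightarrow> dir list" where
  "nodeof J \<phi> c = (SOME u. u \<in> J \<and> \<phi> u = c)"

definition mk :: "nat \<Rightarrow> nat \<Rightarrow> (nat \<Rightarrow> nat option) \<Rightarrow> dir list set \<Rightarrow> (dir list \<Rightarrow> cell) \<Rightarrow> cell \<Rightarrow> sym" where
  "mk n m lr J \<phi> c = (if c \<in> grid n m then
      (if lr (snd c) = Some (fst c) then zero
       else if c \<in> \<phi> ` J then (True, ptr m lr J \<phi> (nodeof J \<phi> c @ [Left]), ptr m lr J \<phi> (nodeof J \<phi> c @ [Right]), None)
       else blank) else zero)"

lemma nodeof_eq: "inj_on \<phi> J \<Longrightarrow> u \<in> J \<Longrightarrow> nodeof J \<phi> (\<phi> u) = u"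
  unfolding nodeof_def by (rule some_equality) (auto simp: inj_on_def)

lemma mk_cong:
  assumes "\<And>q. q \<in> J \<Longrightarrow> \<phi> q = \<psi> q"
  shows "mk n m lr J \<phi> = mk n m lr J \<psi>"
proof -
  have im: "\<phi> ` J = \<psi> ` J" using assms by (auto simp: image_def)
  have no: "nodeof J \<phi> = nodeof J \<psi>"
  proof
    fix c
    have "(\<lambda>u. u \<in> J \<and> \<phi> u = c) = (\<lambda>u. u \<in> J \<and> \<psi> u = c)" using assms by auto
    then show "nodeof J \<phi> c = nodeof J \<psi> c" unfolding nodeof_def by simp
  qed
  have pt: "ptr m lr J \<phi> = ptr m lr J \<psi>"
    using assms by (auto simp: ptr_def fun_eq_iff)
  show ?thesis unfolding mk_def[abs_def] im no pt ..
qed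

context
  fixes m :: nat
  assumes m2: "m \<ge> 2"
begin

lemma LP_len: "length (LP m) = m"
  using tree_T_props[OF m2] unfolding LP_def by auto

lemma LP_distinct: "distinct (LP m)"
  unfolding LP_def by (rule distinct_leaf_paths)

lemma Tp_in: "j \<in> {1..m} \<Longrightarrow> T_path m j \<in> set (LP m)"
  unfolding T_path_def LP_def[symmetric] using LP_len by auto

lemma Tp_inj: "i \<in> {1..m} \<Longrightarrow> j \<in> {1..m} \<Longrightarrow> T_path m i = T_path m j \<Longrightarrow> i = j"
  unfolding T_path_def LP_def[symmetric] using LP_len LP_distinct
  by (auto simp: nth_eq_iff_index_eq)

lemma colof_in:
  assumes "q \<in> set (LP m)"
  shows "colof m q \<in> {1..m} \<and> T_path m (colof m q) = q"
proof -
  obtain i where i: "i < m" "LP m ! i = q" using assms LP_len by (auto simp: in_set_conv_nth)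
  have ex: "Suc i \<in> {1..m} \<and> T_path m (Suc i) = q"
    using i unfolding T_path_def LP_def[symmetric] by auto
  show ?thesis unfolding colof_def
    by (rule theI[of _ "Suc i"]) (use ex Tp_inj in blast)+
qed

lemma colof_Tp: "j \<in> {1..m} \<Longrightarrow> colof m (T_path m j) = j"
  using colof_in[OF Tp_in] Tp_inj by blast

lemma LP_notIN: "q \<in> set (LP m) \<Longrightarrow> q \<notin> IN m"
  unfolding LP_def IN_def by (rule INN_leaf_disjoint)

lemma IN_child: "u \<in> IN m \<Longrightarrow> u @ [d] \<in> IN m \<or> u @ [d] \<in> set (LP m)"
proof -
  assume "u \<in> IN m"
  then obtain p where p: "p \<in> set (LP m)" "prefix (u @ [d]) p"
    using INN_child unfolding IN_def LP_def by blast
  show ?thesis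
  proof (cases "u @ [d] = p")
    case True then show ?thesis using p by simp
  next
    case False then show ?thesis using p unfolding IN_def INN_def LP_def
      by (auto simp: strict_prefix_def)
  qed
qed

lemma root_IN: "[] \<in> IN m"
proof -
  obtain l r where "tree_T m = Node l r" using tree_T_props[OF m2] by blast
  then show ?thesis unfolding IN_def by (simp add: INN_Node)
qed

lemma Tp_ne: "j \<in> {1..m} \<Longrightarrow> T_path m j \<noteq> []"
  using Tp_in root_IN LP_notIN by fastforce

lemma butlast_IN: "q \<in> IN m \<or> q \<in> set (LP m) \<Longrightarrow> q \<noteq> [] \<Longrightarrow> butlast q \<in> IN m"
proof -
  assume q: "q \<in> IN m \<or> q \<in> set (LP m)" "q \<noteq> []"
  then obtain p where p: "p \<in> set (LP m)" "prefix q p"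
    unfolding IN_def INN_def LP_def by (auto simp: strict_prefix_def)
  have "strict_prefix (butlast q) q" using q(2)
    by (metis append_butlast_last_id prefixI strict_prefixI' )
  then have "strict_prefix (butlast q) p" using p(2) by (meson prefix_order.less_le_trans)
  then show ?thesis using p(1) unfolding IN_def INN_def LP_def by blast
qed

lemma finite_IN: "finite (IN m)"
  unfolding IN_def by (rule finite_INN)

lemma card_IN: "card (IN m) \<le> m - 1"
  using card_INN[of "tree_T m"] tree_T_props[OF m2] unfolding IN_def by auto

lemma strict_prefix_IN: "strict_prefix u (T_path m j) \<Longrightarrow> j \<in> {1..m} \<Longrightarrow> u \<in> IN m"
  using Tp_in unfolding IN_def INN_def LP_def by blast

lemma depth_bound: "\<exists>r. 2 ^ r \<le> m \<and> (\<forall>j\<in>{1..m}. length (T_path m j) \<le> Suc r)"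
proof -
  obtain r where r: "2 ^ r \<le> m" "height (tree_T m) \<le> Suc r" using tree_T_props[OF m2] by blast
  have "length (T_path m j) \<le> Suc r" if "j \<in> {1..m}" for j
    using leaf_paths_length[of "T_path m j" "tree_T m"] Tp_in[OF that] r(2) unfolding LP_def by simp
  then show ?thesis using r by blast
qed

end


definition lrof :: "nat \<Rightarrow> (nat \<Rightarrow> nat) \<Rightarrow> nat \<Rightarrow> nat option" where
  "lrof m \<rho> j = (if 1 \<le> j \<and> j \<le> m div 2 then Some 1 else if m div 2 < j \<and> j \<le> m then Some (\<rho> j) else None)"

definition C0 :: "nat \<Rightarrow> nat \<Rightarrow> cell set" where "C0 n m = {2..n} \<times> {1..m div 2}"

definition RHO :: "nat \<Rightarrow> nat \<Rightarrow> (nat \<Rightarrow> nat) set" where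
  "RHO n m = PiE {m div 2 + 1..m} (\<lambda>_. {1..n})"

definition PHI :: "nat \<Rightarrow> nat \<Rightarrow> (dir list \<Rightarrow> cell) set" where
  "PHI n m = {\<phi>. \<phi> \<in> extensional (IN m) \<and> inj_on \<phi> (IN m) \<and> \<phi> ` IN m \<subseteq> C0 n m}"

definition Ufun :: "nat \<Rightarrow> nat \<Rightarrow> (nat \<Rightarrow> nat) \<Rightarrow> (dir list \<Rightarrow> cell) \<Rightarrow> cell \<Rightarrow> sym" where
  "Ufun n m \<rho> \<phi> = mk n m (lrof m \<rho>) (IN m) \<phi>"
definition Wfun :: "nat \<Rightarrow> nat \<Rightarrow> (nat \<Rightarrow> nat) \<Rightarrow> (dir list \<Rightarrow> cell) \<Rightarrow> nat \<Rightarrow> cell \<Rightarrow> sym" where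
  "Wfun n m \<rho> \<phi> b = mk n m ((lrof m \<rho>)(b := None)) (IN m) \<phi>"
definition Umfun :: "nat \<Rightarrow> nat \<Rightarrow> (nat \<Rightarrow> nat) \<Rightarrow> (dir list \<Rightarrow> cell) \<Rightarrow> dir list \<Rightarrow> cell \<Rightarrow> sym" where
  "Umfun n m \<rho> \<phi> u = mk n m (lrof m \<rho>) (IN m - {u}) \<phi>"
definition Yfun :: "nat \<Rightarrow> nat \<Rightarrow> (nat \<Rightarrow> nat) \<Rightarrow> (dir list \<Rightarrow> cell) \<Rightarrow> nat \<Rightarrow> nat \<Rightarrow> cell \<Rightarrow> sym" where
  "Yfun n m \<rho> \<phi> b r = (Wfun n m \<rho> \<phi> b)((r, b) :=
     (True, ptr m ((lrof m \<rho>)(b := None)) (IN m) \<phi> [Left], ptr m ((lrof m \<rho>)(b := None)) (IN m) \<phi> [Right], Some (r, b)))"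

lemma mk_inputs:
  assumes m2: "m \<ge> 2" and lr: "\<And>j i. lr j = Some i \<Longrightarrow> i \<in> {1..n}"
    and J: "\<phi> ` J \<subseteq> grid n m"
  shows "mk n m lr J \<phi> \<in> inputs n m"
proof -
  have pt: "set_option (ptr m lr J \<phi> q) \<subseteq> grid n m" for q
  proof (cases "q \<in> set (LP m)")
    case True
    then show ?thesis using colof_in[OF m2 True] lr unfolding ptr_def grid_def by auto
  next
    case False
    then show ?thesis using J unfolding ptr_def by (auto simp: image_subset_iff)
  qed
  show ?thesis unfolding inputs_def
    using pt by (auto simp: mk_def valid_sym_def lpoint_def rpoint_def ipoint_def zero_def blank_def)
qed

context
  fixes n m :: nat and \<rho> :: "nat \<Rightarrow> nat" and \<phi> :: "dir list \<Rightarrow> cell"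
  assumes m2: "m \<ge> 2" and n2: "n \<ge> 2"
    and \<rho>: "\<And>j. m div 2 < j \<Longrightarrow> j \<le> m \<Longrightarrow> \<rho> j \<in> {1..n}"
    and \<phi>inj: "inj_on \<phi> (IN m)" and \<phi>C: "\<phi> ` IN m \<subseteq> C0 n m"
begin

lemma lrof_range: "lrof m \<rho> j = Some i \<Longrightarrow> i \<in> {1..n}"
  using \<rho> n2 unfolding lrof_def by (auto split: if_splits)

lemma lrof_upd_range: "((lrof m \<rho>)(b := x)) j = Some i \<Longrightarrow> x = None \<or> x = Some i' \<and> i' \<in> {1..n} \<Longrightarrow> i \<in> {1..n}"
  using lrof_range by (auto split: if_splits)

lemma C0_grid: "C0 n m \<subseteq> grid n m"
  unfolding C0_def grid_def by auto

lemma phi_grid: "\<phi> ` J \<subseteq> grid n m" if "J \<subseteq> IN m"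
  using that \<phi>C C0_grid by blast

lemma phi_props: "u \<in> IN m \<Longrightarrow> 2 \<le> fst (\<phi> u) \<and> fst (\<phi> u) \<le> n \<and> 1 \<le> snd (\<phi> u) \<and> snd (\<phi> u) \<le> m div 2"
  using \<phi>C unfolding C0_def by auto

lemma lrof_node: "u \<in> IN m \<Longrightarrow> lrof m \<rho> (snd (\<phi> u)) = Some 1"
  using phi_props unfolding lrof_def by auto

lemma U_in: "Ufun n m \<rho> \<phi> \<in> inputs n m"
  unfolding Ufun_def by (rule mk_inputs[OF m2 lrof_range phi_grid]) auto

lemma W_in: "Wfun n m \<rho> \<phi> b \<in> inputs n m"
  unfolding Wfun_def
proof (rule mk_inputs[OF m2 _ phi_grid])
  fix j i assume "((lrof m \<rho>)(b := None)) j = Some i"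
  then show "i \<in> {1..n}" by (metis fun_upd_apply lrof_range option.distinct(1))
qed auto

lemma Um_in: "Umfun n m \<rho> \<phi> u \<in> inputs n m"
  unfolding Umfun_def by (rule mk_inputs[OF m2 lrof_range phi_grid]) auto

lemma mk_node:
  assumes "u \<in> J" "J \<subseteq> IN m" "\<And>j. lr j = Some 1 \<or> lr j = None \<or> j > m div 2"
  shows "mk n m lr J \<phi> (\<phi> u) = (True, ptr m lr J \<phi> (u @ [Left]), ptr m lr J \<phi> (u @ [Right]), None)"
proof -
  have u: "u \<in> IN m" using assms by auto
  have g: "\<phi> u \<in> grid n m" using phi_grid[of "{u}"] u by auto
  have nl: "lr (snd (\<phi> u)) \<noteq> Some (fst (\<phi> u))" using assms(3)[of "snd (\<phi> u)"] phi_props[OF u] by auto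
  have "nodeof J \<phi> (\<phi> u) = u" using nodeof_eq[of \<phi> J u] \<phi>inj assms(1,2) inj_on_subset by blast
  then show ?thesis unfolding mk_def using g nl assms(1) by auto
qed

lemma W_colb:
  assumes b: "m div 2 < b" and c: "c \<in> grid n m" "snd c = b"
  shows "Wfun n m \<rho> \<phi> b c = blank"
proof -
  have "c \<notin> \<phi> ` IN m"
  proof
    assume "c \<in> \<phi> ` IN m"
    then obtain u where "u \<in> IN m" "c = \<phi> u" by blast
    then show False using phi_props[of u] c b by auto
  qed
  then show ?thesis unfolding Wfun_def mk_def using c by auto
qed

lemma W_leaf:
  assumes "j \<in> {1..m}" "j \<noteq> b" "lrof m \<rho> j = Some i"
  shows "Wfun n m \<rho> \<phi> b (i, j) = zero \<and> (i, j) \<in> grid n m"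
  using assms lrof_range[OF assms(3)] unfolding Wfun_def mk_def grid_def by auto

lemma lrof_Some: "j \<in> {1..m} \<Longrightarrow> \<exists>i. lrof m \<rho> j = Some i"
  unfolding lrof_def by auto

lemma W_not_h1:
  assumes b: "m div 2 < b" "b \<le> m"
  shows "\<not> h1 n m (Wfun n m \<rho> \<phi> b)"
proof
  assume "h1 n m (Wfun n m \<rho> \<phi> b)"
  then obtain b' a where b': "b' \<in> {1..m}" "marked_col n (Wfun n m \<rho> \<phi> b) b'"
    and a: "a \<in> grid n m" "snd a = b'" "Wfun n m \<rho> \<phi> b a \<noteq> (True, None, None, None)"
    unfolding h1_def by blast
  have "b' = b"
  proof (rule ccontr)
    assume "b' \<noteq> b"
    obtain i where i: "lrof m \<rho> b' = Some i" using lrof_Some[OF b'(1)] by blast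
    have "Wfun n m \<rho> \<phi> b (i, b') = zero" using W_leaf[OF b'(1) \<open>b' \<noteq> b\<close> i] by simp
    moreover have "i \<in> {1..n}" using lrof_range[OF i] .
    moreover have "val (Wfun n m \<rho> \<phi> b (i, b'))" using b'(2) \<open>i \<in> {1..n}\<close> unfolding marked_col_def by blast
    ultimately show False by (simp add: val_def zero_def)
  qed
  then show False using W_colb[OF b(1) a(1)] a by (simp add: blank_def)
qed

lemma follow_W:
  assumes j: "j \<in> {1..m}" "j \<noteq> b" and ij: "lrof m \<rho> j = Some ij"
    and x: "\<And>u. u \<in> IN m \<Longrightarrow> x (\<phi> u) = Wfun n m \<rho> \<phi> b (\<phi> u)"
  shows "q \<in> IN m \<Longrightarrow> q @ s = T_path m j \<Longrightarrow> follow x (\<phi> q) s = Some (ij, j)"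
proof (induction s arbitrary: q)
  case Nil
  then show ?case using LP_notIN[OF m2 Tp_in[OF m2 j(1)]] by simp
next
  case (Cons d s)
  let ?lr = "(lrof m \<rho>)(b := None)"
  have xq: "x (\<phi> q) = (True, ptr m ?lr (IN m) \<phi> (q @ [Left]), ptr m ?lr (IN m) \<phi> (q @ [Right]), None)"
    unfolding x[OF Cons.prems(1)] Wfun_def
    by (rule mk_node[OF Cons.prems(1)]) (auto simp: lrof_def)
  have step: "(if d = Left then lpoint (x (\<phi> q)) else rpoint (x (\<phi> q))) = ptr m ?lr (IN m) \<phi> (q @ [d])"
    unfolding xq by (cases d) (auto simp: lpoint_def rpoint_def)
  have pre: "prefix (q @ [d]) (T_path m j)" using Cons.prems(2) by (metis append.assoc append_Cons append_Nil prefixI)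
  consider "q @ [d] \<in> IN m" | "q @ [d] \<in> set (LP m)" using IN_child[OF m2 Cons.prems(1)] by blast
  then show ?case
  proof cases
    case 1
    then have "ptr m ?lr (IN m) \<phi> (q @ [d]) = Some (\<phi> (q @ [d]))"
      using LP_notIN[OF m2] unfolding ptr_def by auto
    then show ?thesis using step Cons.IH[OF 1] Cons.prems(2) by simp
  next
    case 2
    have eq: "q @ [d] = T_path m j"
      using prefix_free_leaf_paths[of "q @ [d]" "tree_T m" "T_path m j"] 2 pre Tp_in[OF m2 j(1)]
      unfolding LP_def by blast
    then have "q @ d # s = q @ [d]" using Cons.prems(2) by simp
    then have "s = []" by simp
    have "colof m (q @ [d]) = j" using eq colof_Tp[OF m2 j(1)] by simp
    then have "ptr m ?lr (IN m) \<phi> (q @ [d]) = Some (ij, j)"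
      using 2 j ij unfolding ptr_def by auto
    then show ?thesis using step \<open>s = []\<close> by simp
  qed
qed

lemma Y_h1:
  assumes b: "m div 2 < b" "b \<le> m" and r: "r \<in> {1..n}"
  shows "h1 n m (Yfun n m \<rho> \<phi> b r)"
proof -
  let ?x = "Yfun n m \<rho> \<phi> b r"
  let ?W = "Wfun n m \<rho> \<phi> b"
  let ?lr = "(lrof m \<rho>)(b := None)"
  have bm: "b \<in> {1..m}" using b by auto
  have a_grid: "(r, b) \<in> grid n m" using r bm unfolding grid_def by auto
  have xa: "?x (r, b) = (True, ptr m ?lr (IN m) \<phi> [Left], ptr m ?lr (IN m) \<phi> [Right], Some (r, b))"
    unfolding Yfun_def by simp
  have xo: "c \<noteq> (r, b) \<Longrightarrow> ?x c = ?W c" for c unfolding Yfun_def by simp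
  have marked: "marked_col n ?x b"
    unfolding marked_col_def
  proof
    fix i assume i: "i \<in> {1..n}"
    show "val (?x (i, b))"
    proof (cases "i = r")
      case True then show ?thesis using xa by (simp add: val_def)
    next
      case False
      have "(i, b) \<in> grid n m" using i bm unfolding grid_def by auto
      then show ?thesis using xo[of "(i,b)"] False W_colb[OF b(1)] by (simp add: val_def blank_def)
    qed
  qed
  have uniq: "b' = b" if b': "b' \<in> {1..m}" "marked_col n ?x b'" for b'
  proof (rule ccontr)
    assume nb: "b' \<noteq> b"
    obtain i where i: "lrof m \<rho> b' = Some i" using lrof_Some[OF b'(1)] by blast
    have "?W (i, b') = zero" using W_leaf[OF b'(1) nb i] by simp
    then have "?x (i, b') = zero" using xo nb by simp
    moreover have "i \<in> {1..n}" using lrof_range[OF i] .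
    moreover have "val (?x (i, b'))" using b'(2) \<open>i \<in> {1..n}\<close> unfolding marked_col_def by blast
    ultimately show False by (simp add: val_def zero_def)
  qed
  have a_ne: "?x (r, b) \<noteq> (True, None, None, None)" using xa by simp
  have a_uniq: "a' = (r, b)" if "a' \<in> grid n m" "snd a' = b" "?x a' \<noteq> (True, None, None, None)" for a'
  proof (rule ccontr)
    assume "a' \<noteq> (r, b)"
    then have "?x a' = blank" using xo W_colb[OF b(1) that(1,2)] by simp
    then show False using that(3) by (simp add: blank_def)
  qed
  have paths: "\<exists>l. follow ?x (r, b) (T_path m j) = Some l \<and> snd l = j \<and> \<not> val (?x l)"
    if j: "j \<in> {1..m}" "j \<noteq> b" for j
  proof -
    obtain ij where ij: "lrof m \<rho> j = Some ij" using lrof_Some[OF j(1)] by blast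
    have lf: "?W (ij, j) = zero" "(ij, j) \<in> grid n m" using W_leaf[OF j ij] by auto
    have xl: "\<not> val (?x (ij, j))" using lf xo[of "(ij, j)"] j(2) by (simp add: val_def zero_def)
    have xnode: "?x (\<phi> u) = ?W (\<phi> u)" if "u \<in> IN m" for u
    proof -
      have "snd (\<phi> u) \<le> m div 2" using phi_props[OF that] by simp
      then have "\<phi> u \<noteq> (r, b)" using b(1) by auto
      then show ?thesis using xo by simp
    qed
    obtain d s where ds: "T_path m j = d # s" using Tp_ne[OF m2 j(1)] by (cases "T_path m j") auto
    have step: "(if d = Left then lpoint (?x (r, b)) else rpoint (?x (r, b))) = ptr m ?lr (IN m) \<phi> [d]"
      unfolding xa by (cases d) (auto simp: lpoint_def rpoint_def)
    have pre: "prefix [d] (T_path m j)" using ds by simp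
    have "follow ?x (r, b) (T_path m j) = Some (ij, j)"
    proof (cases "[d] \<in> set (LP m)")
      case True
      have eq: "[d] = T_path m j"
        using prefix_free_leaf_paths[of "[d]" "tree_T m" "T_path m j"] True pre Tp_in[OF m2 j(1)]
        unfolding LP_def by blast
      then have "s = []" using ds by simp
      have "colof m [d] = j" using eq colof_Tp[OF m2 j(1)] by simp
      then have "ptr m ?lr (IN m) \<phi> [d] = Some (ij, j)" using True j ij unfolding ptr_def by auto
      then show ?thesis using ds step \<open>s = []\<close> by simp
    next
      case False
      then have inn: "[d] \<in> IN m" using IN_child[OF m2 root_IN[OF m2], of d] by simp
      then have "ptr m ?lr (IN m) \<phi> [d] = Some (\<phi> [d])" using False unfolding ptr_def by auto
      moreover have "follow ?x (\<phi> [d]) s = Some (ij, j)"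
        using follow_W[OF j ij xnode inn] ds by simp
      ultimately show ?thesis using ds step by simp
    qed
    then show ?thesis using xl by auto
  qed
  have ip: "ipoint (?x (r, b)) = Some (r, b)" using xa by (simp add: ipoint_def)
  have A: "(r, b) \<in> grid n m \<and> snd (r, b) = b \<and> ?x (r, b) \<noteq> (True, None, None, None) \<and>
        (\<forall>a'\<in>grid n m. snd a' = b \<and> ?x a' \<noteq> (True, None, None, None) \<longrightarrow> a' = (r, b)) \<and>
        ipoint (?x (r, b)) = Some (r, b) \<and>
        (\<forall>j\<in>{1..m}. j \<noteq> b \<longrightarrow> (\<exists>l. follow ?x (r, b) (T_path m j) = Some l \<and> snd l = j \<and> \<not> val (?x l)))"
  proof (intro conjI)
    show "\<forall>a'\<in>grid n m. snd a' = b \<and> ?x a' \<noteq> (True, None, None, None) \<longrightarrow> a' = (r, b)"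
      using a_uniq by blast
    show "\<forall>j\<in>{1..m}. j \<noteq> b \<longrightarrow> (\<exists>l. follow ?x (r, b) (T_path m j) = Some l \<and> snd l = j \<and> \<not> val (?x l))"
      using paths by blast
  qed (fact a_grid | simp | fact a_ne | fact ip)+
  show ?thesis unfolding h1_def using bm marked uniq A by blast
qed

lemma Y_in:
  assumes b: "m div 2 < b" "b \<le> m" and r: "r \<in> {1..n}"
  shows "Yfun n m \<rho> \<phi> b r \<in> inputs n m"
proof -
  let ?lr = "(lrof m \<rho>)(b := None)"
  have pt: "set_option (ptr m ?lr (IN m) \<phi> q) \<subseteq> grid n m" for q
  proof (cases "q \<in> set (LP m)")
    case True
    then show ?thesis using colof_in[OF m2 True] lrof_range unfolding ptr_def grid_def
      by (auto split: if_splits)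
  next
    case False
    then show ?thesis using phi_grid[of "IN m"] unfolding ptr_def by (auto simp: image_subset_iff)
  qed
  have g: "(r, b) \<in> grid n m" using r b unfolding grid_def by auto
  show ?thesis using W_in[of b] pt g unfolding Yfun_def inputs_def
    by (auto simp: valid_sym_def lpoint_def rpoint_def ipoint_def)
qed

lemma nodeof_in: "c \<in> \<phi> ` J \<Longrightarrow> nodeof J \<phi> c \<in> J \<and> \<phi> (nodeof J \<phi> c) = c"
  unfolding nodeof_def by (rule someI_ex) blast

lemma U_W_agree:
  assumes b: "m div 2 < b" "b \<le> m" and c: "c \<noteq> (\<rho> b, b)" "c \<noteq> \<phi> (butlast (T_path m b))"
  shows "Ufun n m \<rho> \<phi> c = Wfun n m \<rho> \<phi> b c"
proof -
  let ?lr = "lrof m \<rho>"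
  let ?lr' = "(lrof m \<rho>)(b := None)"
  have lrb: "?lr b = Some (\<rho> b)" using b unfolding lrof_def by auto
  have lt: "(?lr (snd c) = Some (fst c)) = (?lr' (snd c) = Some (fst c))"
  proof (cases "snd c = b")
    case True
    then have "fst c \<noteq> \<rho> b" using c(1) by (metis prod.collapse)
    then show ?thesis using True lrb by simp
  qed simp
  have pt: "ptr m ?lr (IN m) \<phi> (nodeof (IN m) \<phi> c @ [d]) = ptr m ?lr' (IN m) \<phi> (nodeof (IN m) \<phi> c @ [d])"
    if cn: "c \<in> \<phi> ` IN m" for d
  proof -
    let ?u = "nodeof (IN m) \<phi> c"
    have u: "?u \<in> IN m" "\<phi> ?u = c" using nodeof_in[OF cn] by auto
    show ?thesis
    proof (cases "?u @ [d] \<in> set (LP m) \<and> colof m (?u @ [d]) = b")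
      case True
      then have "T_path m b = ?u @ [d]" using colof_in[OF m2] by metis
      then have "butlast (T_path m b) = ?u" by simp
      then show ?thesis using u c(2) by simp
    next
      case False
      then show ?thesis unfolding ptr_def by auto
    qed
  qed
  show ?thesis unfolding Ufun_def Wfun_def mk_def using lt pt by simp
qed

lemma U_Um_agree:
  assumes u: "u \<in> IN m" and c: "c \<noteq> \<phi> u" "c \<noteq> \<phi> (butlast u)"
  shows "Ufun n m \<rho> \<phi> c = Umfun n m \<rho> \<phi> u c"
proof -
  let ?lr = "lrof m \<rho>"
  have im: "(c \<in> \<phi> ` IN m) = (c \<in> \<phi> ` (IN m - {u}))" using c(1) by auto
  have no: "nodeof (IN m) \<phi> c = nodeof (IN m - {u}) \<phi> c" if cn: "c \<in> \<phi> ` (IN m - {u})"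
  proof -
    obtain v where v: "v \<in> IN m - {u}" "\<phi> v = c" using cn by blast
    have "nodeof (IN m) \<phi> c = v" using nodeof_eq[OF \<phi>inj, of v] v by auto
    moreover have "nodeof (IN m - {u}) \<phi> c = v"
      using nodeof_eq[OF inj_on_subset[OF \<phi>inj], of "IN m - {u}" v] v by auto
    ultimately show ?thesis by simp
  qed
  have pt: "ptr m ?lr (IN m) \<phi> (nodeof (IN m - {u}) \<phi> c @ [d]) = ptr m ?lr (IN m - {u}) \<phi> (nodeof (IN m - {u}) \<phi> c @ [d])"
    if cn: "c \<in> \<phi> ` (IN m - {u})" for d
  proof -
    let ?v = "nodeof (IN m - {u}) \<phi> c"
    have v: "?v \<in> IN m - {u}" "\<phi> ?v = c" using nodeof_in[OF cn] by auto
    show ?thesis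
    proof (cases "?v @ [d] = u")
      case True
      then have "butlast u = ?v" by (metis butlast_snoc)
      then show ?thesis using v c(2) by simp
    next
      case False
      then show ?thesis unfolding ptr_def by auto
    qed
  qed
  show ?thesis unfolding Ufun_def Umfun_def mk_def using im no pt by auto
qed

end


lemma W_indep: "Wfun n m (\<rho>(b := i)) \<phi> b = Wfun n m \<rho> \<phi> b"
proof -
  have "(lrof m (\<rho>(b := i)))(b := None) = (lrof m \<rho>)(b := None)"
    by (auto simp: lrof_def fun_eq_iff)
  then show ?thesis unfolding Wfun_def by simp
qed

lemma Um_indep: "Umfun n m \<rho> (\<phi>(u := c)) u = Umfun n m \<rho> \<phi> u"
  unfolding Umfun_def by (rule mk_cong) auto


section \<open>Reindexing sums\<close>

lemma finite_RHO: "finite (RHO n m)"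
  unfolding RHO_def by (rule finite_PiE) auto

lemma RHO_upd: "\<rho> \<in> RHO n m \<Longrightarrow> b \<in> {m div 2 + 1..m} \<Longrightarrow> i \<in> {1..n} \<Longrightarrow> \<rho>(b := i) \<in> RHO n m"
  unfolding RHO_def by (auto simp: PiE_iff extensional_def)

lemma RHO_val: "\<rho> \<in> RHO n m \<Longrightarrow> m div 2 < j \<Longrightarrow> j \<le> m \<Longrightarrow> \<rho> j \<in> {1..n}"
  unfolding RHO_def by (auto simp: PiE_iff)

lemma sum_RHO_upd:
  fixes F :: "(nat \<Rightarrow> nat) \<Rightarrow> 'a::comm_semiring_1"
  assumes b: "b \<in> {m div 2 + 1..m}"
  shows "(\<Sum>\<rho>\<in>RHO n m. \<Sum>i\<in>{1..n}. F (\<rho>(b := i))) = of_nat n * (\<Sum>\<rho>\<in>RHO n m. F \<rho>)"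
proof -
  let ?S = "RHO n m \<times> {1..n}"
  let ?g = "\<lambda>p. ((fst p)(b := snd p), fst p b)"
  have "(\<Sum>\<rho>\<in>RHO n m. \<Sum>i\<in>{1..n}. F (\<rho>(b := i))) = (\<Sum>p\<in>?S. F ((fst p)(b := snd p)))"
    by (simp add: sum.cartesian_product split_def)
  also have "\<dots> = (\<Sum>p\<in>?S. F (fst p))"
  proof -
    have inv: "?g (?g p) = p \<and> ?g p \<in> ?S" if p: "p \<in> ?S" for p
      using p RHO_upd[OF _ b] RHO_val[of _ n m b] b by (cases p) auto
    show ?thesis by (rule sum.reindex_bij_witness[of _ ?g ?g]) (use inv in auto)
  qed
  also have "\<dots> = (\<Sum>\<rho>\<in>RHO n m. \<Sum>i\<in>{1..n}. F \<rho>)"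
    by (subst sum.cartesian_product) (simp only: split_def)
  also have "\<dots> = of_nat n * (\<Sum>\<rho>\<in>RHO n m. F \<rho>)"
    by (simp add: sum_distrib_left mult.commute)
  finally show ?thesis .
qed

definition Rset :: "nat \<Rightarrow> nat \<Rightarrow> (dir list \<Rightarrow> cell) \<Rightarrow> dir list \<Rightarrow> cell set" where
  "Rset n m \<phi> u = C0 n m - \<phi> ` (IN m - {u})"

lemma finite_C0: "finite (C0 n m)" unfolding C0_def by simp

lemma finite_PHI:
  assumes "m \<ge> 2"
  shows "finite (PHI n m)"
proof -
  have "PHI n m \<subseteq> PiE (IN m) (\<lambda>_. C0 n m)"
    unfolding PHI_def by (auto simp: PiE_iff extensional_def)
  moreover have "finite (PiE (IN m) (\<lambda>_. C0 n m))"
    using finite_IN[OF assms] finite_C0 by (intro finite_PiE) auto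
  ultimately show ?thesis by (rule finite_subset)
qed

lemma PHI_upd:
  assumes "\<phi> \<in> PHI n m" "u \<in> IN m" "c \<in> Rset n m \<phi> u"
  shows "\<phi>(u := c) \<in> PHI n m"
proof -
  have "inj_on (\<phi>(u := c)) (IN m)"
  proof -
    have "inj_on \<phi> (IN m - {u})" using assms(1) unfolding PHI_def by (auto intro: inj_on_subset)
    then have "inj_on (\<phi>(u := c)) (IN m - {u})" by (simp add: inj_on_def)
    moreover have "c \<notin> (\<phi>(u := c)) ` (IN m - {u})" using assms(3) unfolding Rset_def by auto
    ultimately have "inj_on (\<phi>(u := c)) (insert u (IN m - {u}))"
      by (subst inj_on_insert) simp
    moreover have "insert u (IN m - {u}) = IN m" using assms(2) by auto
    ultimately show ?thesis by simp
  qed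
  then show ?thesis using assms unfolding PHI_def Rset_def by (auto simp: extensional_def)
qed

lemma card_Rset:
  assumes m2: "m \<ge> 2" and "\<phi> \<in> PHI n m" "u \<in> IN m"
  shows "card (Rset n m \<phi> u) = card (C0 n m) - (card (IN m) - 1)"
proof -
  have inj: "inj_on \<phi> (IN m - {u})" using assms(2) unfolding PHI_def by (auto intro: inj_on_subset)
  have sub: "\<phi> ` (IN m - {u}) \<subseteq> C0 n m" using assms(2) unfolding PHI_def by auto
  have "card (\<phi> ` (IN m - {u})) = card (IN m) - 1"
    using card_image[OF inj] assms(3) finite_IN[OF m2] by simp
  then show ?thesis unfolding Rset_def using card_Diff_subset[OF finite_subset[OF sub finite_C0] sub] by simp
qed

lemma sum_PHI_upd:
  fixes F :: "(dir list \<Rightarrow> cell) \<Rightarrow> 'a::comm_semiring_1"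
  assumes m2: "m \<ge> 2" and u: "u \<in> IN m"
  shows "(\<Sum>\<phi>\<in>PHI n m. \<Sum>c\<in>Rset n m \<phi> u. F (\<phi>(u := c)))
       = of_nat (card (C0 n m) - (card (IN m) - 1)) * (\<Sum>\<phi>\<in>PHI n m. F \<phi>)"
proof -
  let ?S = "Sigma (PHI n m) (\<lambda>\<phi>. Rset n m \<phi> u)"
  let ?g = "\<lambda>p. ((fst p)(u := snd p), fst p u)"
  have fin: "finite (Rset n m \<phi> u)" for \<phi> unfolding Rset_def using finite_C0 by simp
  have "(\<Sum>\<phi>\<in>PHI n m. \<Sum>c\<in>Rset n m \<phi> u. F (\<phi>(u := c))) = (\<Sum>p\<in>?S. F ((fst p)(u := snd p)))"
    using finite_PHI[OF m2] fin by (simp add: sum.Sigma split_def)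
  also have "\<dots> = (\<Sum>p\<in>?S. F (fst p))"
  proof -
    have inv: "?g (?g p) = p \<and> ?g p \<in> ?S" if p: "p \<in> ?S" for p
    proof -
    from p obtain \<phi> c where pc: "p = (\<phi>, c)" "\<phi> \<in> PHI n m" "c \<in> Rset n m \<phi> u" by auto
    have R: "Rset n m (\<phi>(u := c)) u = Rset n m \<phi> u"
    proof -
      have "(\<phi>(u := c)) ` (IN m - {u}) = \<phi> ` (IN m - {u})" by auto
      then show ?thesis unfolding Rset_def by simp
    qed
    have pu: "\<phi> u \<in> Rset n m \<phi> u"
    proof -
      have "\<phi> u \<in> C0 n m" using pc(2) u unfolding PHI_def by auto
      moreover have "\<phi> u \<notin> \<phi> ` (IN m - {u})"
        using pc(2) u unfolding PHI_def by (auto simp: inj_on_def)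
      ultimately show ?thesis unfolding Rset_def by simp
    qed
    show ?thesis using pc PHI_upd[OF pc(2) u pc(3)] R pu by auto
    qed
    show ?thesis by (rule sum.reindex_bij_witness[of _ ?g ?g]) (use inv in auto)
  qed
  also have "\<dots> = (\<Sum>\<phi>\<in>PHI n m. \<Sum>c\<in>Rset n m \<phi> u. F \<phi>)"
    using finite_PHI[OF m2] fin by (subst sum.Sigma) (auto simp only: split_def)
  also have "\<dots> = (\<Sum>\<phi>\<in>PHI n m. of_nat (card (C0 n m) - (card (IN m) - 1)) * F \<phi>)"
    by (rule sum.cong) (auto simp: card_Rset[OF m2 _ u])
  also have "\<dots> = of_nat (card (C0 n m) - (card (IN m) - 1)) * (\<Sum>\<phi>\<in>PHI n m. F \<phi>)"
    by (simp add: sum_distrib_left)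
  finally show ?thesis .
qed


section \<open>Per-tree counting\<close>

definition Col :: "nat \<Rightarrow> nat \<Rightarrow> cell set" where "Col n b = {1..n} \<times> {b}"

lemma card_Col: "card (Col n b) = n"
proof -
  have "Col n b = (\<lambda>i. (i, b)) ` {1..n}" unfolding Col_def by auto
  then show ?thesis by (simp add: card_image inj_on_def)
qed

lemma finite_Col: "finite (Col n b)" unfolding Col_def by simp

lemma sum_Col: "(\<Sum>c\<in>Col n b. g c) = (\<Sum>i\<in>{1..n}. g (i, b))"
proof -
  have "Col n b = (\<lambda>i. (i, b)) ` {1..n}" unfolding Col_def by auto
  then show ?thesis by (simp add: sum.reindex inj_on_def)
qed

lemma sum_ind_Col: "A \<subseteq> Col n b \<Longrightarrow> (\<Sum>i\<in>{1..n}. (of_bool ((i, b) \<in> A) :: nat)) = card A"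
proof -
  assume A: "A \<subseteq> Col n b"
  have "(\<Sum>i\<in>{1..n}. (of_bool ((i, b) \<in> A) :: nat)) = (\<Sum>c\<in>Col n b. of_bool (c \<in> A))"
    by (simp add: sum_Col)
  also have "\<dots> = card A"
    using A finite_Col[of n b] by (simp add: of_bool_def sum.If_cases Int_absorb1)
  finally show ?thesis .
qed

context
  fixes n m :: nat and \<rho> :: "nat \<Rightarrow> nat" and \<phi> :: "dir list \<Rightarrow> cell"
  assumes m2: "m \<ge> 2" and n2: "n \<ge> 2"
    and \<rho>: "\<And>j. m div 2 < j \<Longrightarrow> j \<le> m \<Longrightarrow> \<rho> j \<in> {1..n}"
    and \<phi>inj: "inj_on \<phi> (IN m)" and \<phi>C: "\<phi> ` IN m \<subseteq> C0 n m"
begin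

lemma P1_local:
  fixes t :: "(cell, sym) dtree"
  assumes b: "m div 2 < b" "b \<le> m"
  shows "n * card (set (qlist t (Wfun n m \<rho> \<phi> b)) \<inter> Col n b)
     \<le> 4 * (\<Sum>i\<in>{1..n}. card (set (qlist t (Ufun n m (\<rho>(b := i)) \<phi>)) \<inter> Col n b))
       + n * (\<Sum>i\<in>{1..n}. of_bool (\<phi> (butlast (T_path m b)) \<in> set (qlist t (Ufun n m (\<rho>(b := i)) \<phi>))))"
proof -
  define p where "p = \<phi> (butlast (T_path m b))"
  define W where "W = Wfun n m \<rho> \<phi> b"
  define l where "l = qlist t W"
  define xs where "xs = takeWhile (\<lambda>z. z \<noteq> p) l"
  define A where "A = set xs \<inter> Col n b"
  define U where "U i = Ufun n m (\<rho>(b := i)) \<phi>" for i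
  have bm: "b \<in> {1..m}" using b by auto
  have \<rho>i: "(\<rho>(b := i)) j \<in> {1..n}" if "i \<in> {1..n}" "m div 2 < j" "j \<le> m" for i j
    using \<rho> that by auto
  have agree: "cut {(i, b), p} (qlist t (U i)) = cut {(i, b), p} l" if i: "i \<in> {1..n}" for i
  proof -
    have "U i z = W z" if "z \<notin> {(i, b), p}" for z
    proof -
      have "Ufun n m (\<rho>(b := i)) \<phi> z = Wfun n m (\<rho>(b := i)) \<phi> b z"
        by (rule U_W_agree[OF m2 n2 \<rho>i[OF i] \<phi>inj \<phi>C b]) (use that p_def in auto)
      then show ?thesis unfolding U_def W_def W_indep .
    qed
    then show ?thesis unfolding l_def by (rule agree_cut)
  qed
  have pin: "butlast (T_path m b) \<in> IN m"
    using butlast_IN[OF m2] Tp_in[OF m2 bm] Tp_ne[OF m2 bm] by blast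
  have p_notcol: "p \<notin> Col n b"
    using phi_props[OF m2 n2 \<rho> \<phi>inj \<phi>C pin] b unfolding p_def Col_def by auto
  have AC: "A \<subseteq> Col n b" unfolding A_def by auto
  have cardA: "card A \<le> n" using card_mono[OF finite_Col AC] card_Col by simp
  have a: "card (set l \<inter> Col n b) \<le> card A + n * of_bool (p \<in> set l)"
  proof (cases "p \<in> set l")
    case True
    have "card (set l \<inter> Col n b) \<le> card (Col n b)" by (rule card_mono[OF finite_Col]) auto
    then have "card (set l \<inter> Col n b) \<le> n" by (simp add: card_Col)
    then show ?thesis using True by simp
  next
    case False
    then have "xs = l" unfolding xs_def by (auto simp: takeWhile_eq_all_conv)
    then show ?thesis unfolding A_def by simp
  qed
  have bb: "of_bool (p \<in> set l) \<le> of_bool (p \<in> set (qlist t (U i))) + (of_bool ((i, b) \<in> A) :: nat)"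
    if i: "i \<in> {1..n}" for i
  proof (cases "p \<in> set l \<and> (i, b) \<notin> A")
    case True
    then have "(i, b) \<notin> set xs" unfolding A_def Col_def using i by auto
    then have "p \<in> set (cut {(i, b), p} l)" using L4[of p l "(i, b)"] True unfolding xs_def by auto
    then have "p \<in> set (qlist t (U i))" using agree[OF i] set_cut by (metis subsetD)
    then show ?thesis using True by simp
  next
    case False
    then show ?thesis by auto
  qed
  have c: "n * card (set l \<inter> Col n b) \<le> 2 * n * card A + n * (\<Sum>i\<in>{1..n}. of_bool (p \<in> set (qlist t (U i))))"
  proof -
    have "n * card (set l \<inter> Col n b) = (\<Sum>i\<in>{1..n}. card (set l \<inter> Col n b))" by simp
    also have "\<dots> \<le> (\<Sum>i\<in>{1..n}. card A + n * of_bool (p \<in> set (qlist t (U i))) + n * of_bool ((i, b) \<in> A))"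
    proof (rule sum_mono)
      fix i assume i: "i \<in> {1..n}"
      have "card (set l \<inter> Col n b) \<le> card A + n * of_bool (p \<in> set l)" by (rule a)
      also have "\<dots> \<le> card A + n * (of_bool (p \<in> set (qlist t (U i))) + of_bool ((i, b) \<in> A))"
        using bb[OF i] by (intro add_left_mono mult_left_mono) auto
      finally show "card (set l \<inter> Col n b) \<le> card A + n * of_bool (p \<in> set (qlist t (U i))) + n * of_bool ((i, b) \<in> A)"
        by (simp add: algebra_simps)
    qed
    also have "\<dots> = n * card A + n * (\<Sum>i\<in>{1..n}. of_bool (p \<in> set (qlist t (U i)))) + n * (\<Sum>i\<in>{1..n}. (of_bool ((i, b) \<in> A) :: nat))"
      by (simp add: sum.distrib sum_distrib_left)
    also have "(\<Sum>i\<in>{1..n}. (of_bool ((i, b) \<in> A) :: nat)) = card A" by (rule sum_ind_Col[OF AC])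
    finally show ?thesis by (simp add: algebra_simps)
  qed
  have d: "n * card A \<le> 2 * (\<Sum>i\<in>{1..n}. card (set (qlist t (U i)) \<inter> Col n b))"
  proof -
    have "card (Col n b) * card (set xs \<inter> Col n b) \<le> 2 * (\<Sum>c\<in>Col n b. card (set (qlist t (U (fst c))) \<inter> Col n b))"
    proof (rule rank_ineq[OF finite_Col])
      fix c assume c: "c \<in> set xs \<inter> Col n b"
      then obtain i where ci: "c = (i, b)" "i \<in> {1..n}" unfolding Col_def by auto
      have "set (takeWhile (\<lambda>z. z \<noteq> c) xs) \<union> {c} \<subseteq> set (cut {c, p} l)"
        using L6[of c p l] c unfolding xs_def by auto
      also have "\<dots> \<subseteq> set (qlist t (U i))" using agree[OF ci(2)] set_cut ci(1) by metis
      finally show "card ((set (takeWhile (\<lambda>z. z \<noteq> c) xs) \<union> {c}) \<inter> Col n b) \<le> card (set (qlist t (U (fst c))) \<inter> Col n b)"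
        using ci by (intro card_mono) auto
    next
      fix c assume c: "c \<in> Col n b - set xs"
      then obtain i where ci: "c = (i, b)" "i \<in> {1..n}" unfolding Col_def by auto
      have "set xs \<subseteq> set (cut {c, p} l)" using L5[of c p l] c unfolding xs_def by auto
      also have "\<dots> \<subseteq> set (qlist t (U i))" using agree[OF ci(2)] set_cut ci(1) by metis
      finally show "card (set xs \<inter> Col n b) \<le> card (set (qlist t (U (fst c))) \<inter> Col n b)"
        using ci by (intro card_mono) auto
    qed auto
    then show ?thesis unfolding card_Col A_def by (simp add: sum_Col)
  qed
  have "n * card (set l \<inter> Col n b) \<le> 4 * (\<Sum>i\<in>{1..n}. card (set (qlist t (U i)) \<inter> Col n b)) + n * (\<Sum>i\<in>{1..n}. of_bool (p \<in> set (qlist t (U i))))"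
    using c d by linarith
  then show ?thesis unfolding l_def W_def U_def p_def .
qed

end


lemma P2: "(\<Sum>b\<in>B. card (set l \<inter> Col n b)) \<le> length l" if "finite B"
proof -
  have "(\<Sum>b\<in>B. card (set l \<inter> Col n b)) = card (\<Union>b\<in>B. set l \<inter> Col n b)"
    by (rule card_UN_disjoint[symmetric]) (use that in \<open>auto simp: Col_def\<close>)
  also have "\<dots> \<le> card (set l)" by (rule card_mono) auto
  also have "\<dots> \<le> length l" by (rule card_length)
  finally show ?thesis .
qed

definition blind :: "(cell, sym) dtree \<Rightarrow> nat \<Rightarrow> nat \<Rightarrow> (nat \<Rightarrow> nat) \<Rightarrow> (dir list \<Rightarrow> cell) \<Rightarrow> dir list \<Rightarrow> bool" where
  "blind t n m \<rho> \<phi> u = (if u = [] then \<phi> u \<in> set (qlist t (Ufun n m \<rho> \<phi>))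
      else \<phi> u \<in> set (takeWhile (\<lambda>z. z \<noteq> \<phi> (butlast u)) (qlist t (Ufun n m \<rho> \<phi>))))"

lemma anc_blind:
  assumes m2: "m \<ge> 2"
  shows "q \<in> IN m \<Longrightarrow> \<phi> q \<in> set (qlist t (Ufun n m \<rho> \<phi>)) \<Longrightarrow> \<exists>u\<in>IN m. prefix u q \<and> blind t n m \<rho> \<phi> u"
proof (induction "length q" arbitrary: q rule: less_induct)
  case less
  show ?case
  proof (cases "q = []")
    case True
    then show ?thesis using less.prems unfolding blind_def by auto
  next
    case False
    show ?thesis
    proof (cases "blind t n m \<rho> \<phi> q")
      case True then show ?thesis using less.prems by auto
    next
      case nb: False
      then have "\<phi> (butlast q) \<in> set (qlist t (Ufun n m \<rho> \<phi>))"
        using L3[of "\<phi> q" _ "\<phi> (butlast q)"] less.prems False unfolding blind_def by auto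
      moreover have "butlast q \<in> IN m" using butlast_IN[OF m2] less.prems False by blast
      moreover have "length (butlast q) < length q" using False by simp
      ultimately obtain u where "u \<in> IN m" "prefix u (butlast q)" "blind t n m \<rho> \<phi> u"
        using less.hyps by blast
      moreover have "prefix (butlast q) q" by (rule prefixeq_butlast)
      ultimately show ?thesis by (meson prefix_order.trans)
    qed
  qed
qed

lemma P3:
  assumes m2: "m \<ge> 2" and b: "b \<in> {1..m}"
  shows "(of_bool (\<phi> (butlast (T_path m b)) \<in> set (qlist t (Ufun n m \<rho> \<phi>))) :: nat)
    \<le> (\<Sum>u\<in>{u\<in>IN m. strict_prefix u (T_path m b)}. of_bool (blind t n m \<rho> \<phi> u))"
proof (cases "\<phi> (butlast (T_path m b)) \<in> set (qlist t (Ufun n m \<rho> \<phi>))")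
  case True
  have pin: "butlast (T_path m b) \<in> IN m"
    using butlast_IN[OF m2] Tp_in[OF m2 b] Tp_ne[OF m2 b] by blast
  obtain u where u: "u \<in> IN m" "prefix u (butlast (T_path m b))" "blind t n m \<rho> \<phi> u"
    using anc_blind[OF m2 pin True] by blast
  have sp: "strict_prefix u (T_path m b)"
  proof -
    have "strict_prefix (butlast (T_path m b)) (T_path m b)" using Tp_ne[OF m2 b]
      by (metis append_butlast_last_id prefixI strict_prefixI')
    then show ?thesis using u(2) by (meson prefix_order.le_less_trans)
  qed
  have fin: "finite {u\<in>IN m. strict_prefix u (T_path m b)}" using finite_IN[OF m2] by simp
  have "(1::nat) \<le> (\<Sum>u\<in>{u\<in>IN m. strict_prefix u (T_path m b)}. of_bool (blind t n m \<rho> \<phi> u))"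
  proof -
    have "(of_bool (blind t n m \<rho> \<phi> u) :: nat) \<le> (\<Sum>u\<in>{u\<in>IN m. strict_prefix u (T_path m b)}. of_bool (blind t n m \<rho> \<phi> u))"
      by (rule member_le_sum) (use u sp fin in auto)
    then show ?thesis using u(3) by simp
  qed
  then show ?thesis using True by simp
qed simp

lemma P4_local:
  assumes m2: "m \<ge> 2" and n2: "n \<ge> 2"
    and \<rho>: "\<And>j. m div 2 < j \<Longrightarrow> j \<le> m \<Longrightarrow> \<rho> j \<in> {1..n}"
    and \<phi>: "\<phi> \<in> PHI n m" and u: "u \<in> IN m"
  shows "(\<Sum>c\<in>Rset n m \<phi> u. (of_bool (blind t n m \<rho> (\<phi>(u := c)) u) :: nat)) \<le> dt_cost t (Umfun n m \<rho> \<phi> u)"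
proof -
  let ?Q = "set (qlist t (Umfun n m \<rho> \<phi> u))"
  have sub: "{c \<in> Rset n m \<phi> u. blind t n m \<rho> (\<phi>(u := c)) u} \<subseteq> ?Q"
  proof
    fix c assume c: "c \<in> {c \<in> Rset n m \<phi> u. blind t n m \<rho> (\<phi>(u := c)) u}"
    let ?\<psi> = "\<phi>(u := c)"
    have \<psi>: "?\<psi> \<in> PHI n m" using PHI_upd[OF \<phi> u] c by auto
    have \<psi>inj: "inj_on ?\<psi> (IN m)" and \<psi>C: "?\<psi> ` IN m \<subseteq> C0 n m" using \<psi> unfolding PHI_def by auto
    let ?D = "{c, ?\<psi> (butlast u)}"
    have ag: "Ufun n m \<rho> ?\<psi> z = Umfun n m \<rho> \<phi> u z" if "z \<notin> ?D" for z
    proof -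
      have "Ufun n m \<rho> ?\<psi> z = Umfun n m \<rho> ?\<psi> u z"
        by (rule U_Um_agree[OF m2 n2 \<rho> \<psi>inj \<psi>C u]) (use that in auto)
      then show ?thesis unfolding Um_indep .
    qed
    have cut_eq: "cut ?D (qlist t (Ufun n m \<rho> ?\<psi>)) = cut ?D (qlist t (Umfun n m \<rho> \<phi> u))"
      by (rule agree_cut) (use ag in auto)
    show "c \<in> ?Q"
    proof (cases "u = []")
      case True
      then have "c \<in> set (qlist t (Ufun n m \<rho> ?\<psi>))" using c unfolding blind_def by auto
      then have "c \<in> set (cut {c} (qlist t (Ufun n m \<rho> ?\<psi>)))" by (rule L2)
      moreover have "?D = {c}" using True by simp
      ultimately have "c \<in> set (cut {c} (qlist t (Umfun n m \<rho> \<phi> u)))" using cut_eq by simp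
      then show ?thesis by (rule subsetD[OF set_cut])
    next
      case False
      have "c \<in> set (takeWhile (\<lambda>z. z \<noteq> ?\<psi> (butlast u)) (qlist t (Ufun n m \<rho> ?\<psi>)))"
        using c False unfolding blind_def by auto
      then have "c \<in> set (cut ?D (qlist t (Ufun n m \<rho> ?\<psi>)))" by (rule L1)
      then have "c \<in> set (cut ?D (qlist t (Umfun n m \<rho> \<phi> u)))" using cut_eq by simp
      then show ?thesis by (rule subsetD[OF set_cut])
    qed
  qed
  have fin: "finite (Rset n m \<phi> u)" unfolding Rset_def using finite_C0 by simp
  have "(\<Sum>c\<in>Rset n m \<phi> u. (of_bool (blind t n m \<rho> (\<phi>(u := c)) u) :: nat))
      = card {c \<in> Rset n m \<phi> u. blind t n m \<rho> (\<phi>(u := c)) u}"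
    using fin by (simp add: of_bool_def sum.If_cases Collect_conj_eq Int_commute)
  also have "\<dots> \<le> card ?Q" by (rule card_mono[OF _ sub]) simp
  also have "\<dots> \<le> length (qlist t (Umfun n m \<rho> \<phi> u))" by (rule card_length)
  finally show ?thesis by (simp add: length_qlist)
qed



definition SS :: "nat \<Rightarrow> nat set" where "SS m = {m div 2 + 1..m}"
definition R0 :: "nat \<Rightarrow> nat \<Rightarrow> nat" where "R0 n m = card (C0 n m) - (card (IN m) - 1)"
definition ww :: "nat \<Rightarrow> dir list \<Rightarrow> nat" where "ww m u = card {b \<in> SS m. strict_prefix u (T_path m b)}"

lemma per_tree:
  fixes t :: "(cell, sym) dtree"
  assumes m2: "m \<ge> 2" and n2: "n \<ge> 2"
  shows "R0 n m * (\<Sum>b\<in>SS m. \<Sum>\<phi>\<in>PHI n m. \<Sum>\<rho>\<in>RHO n m. card (set (qlist t (Wfun n m \<rho> \<phi> b)) \<inter> Col n b))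
    \<le> 4 * R0 n m * (\<Sum>\<phi>\<in>PHI n m. \<Sum>\<rho>\<in>RHO n m. dt_cost t (Ufun n m \<rho> \<phi>))
      + n * (\<Sum>u\<in>IN m. ww m u * (\<Sum>\<phi>\<in>PHI n m. \<Sum>\<rho>\<in>RHO n m. dt_cost t (Umfun n m \<rho> \<phi> u)))"
proof -
  let ?QU = "\<lambda>\<rho> \<phi>. set (qlist t (Ufun n m \<rho> \<phi>))"
  let ?ind = "\<lambda>b \<rho> \<phi>. (of_bool (\<phi> (butlast (T_path m b)) \<in> ?QU \<rho> \<phi>) :: nat)"
  let ?bl = "\<lambda>u \<rho> \<phi>. (of_bool (blind t n m \<rho> \<phi> u) :: nat)"
  have rng: "\<And>j. m div 2 < j \<Longrightarrow> j \<le> m \<Longrightarrow> \<rho> j \<in> {1..n}" if "\<rho> \<in> RHO n m" for \<rho>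
    using RHO_val that by blast
  have phi: "inj_on \<phi> (IN m)" "\<phi> ` IN m \<subseteq> C0 n m" if "\<phi> \<in> PHI n m" for \<phi>
    using that unfolding PHI_def by auto
  have finS: "finite (SS m)" unfolding SS_def by simp
  note finR = finite_RHO and finP = finite_PHI[OF m2] and finI = finite_IN[OF m2]
  have A: "(\<Sum>\<rho>\<in>RHO n m. card (set (qlist t (Wfun n m \<rho> \<phi> b)) \<inter> Col n b))
      \<le> 4 * (\<Sum>\<rho>\<in>RHO n m. card (?QU \<rho> \<phi> \<inter> Col n b)) + n * (\<Sum>\<rho>\<in>RHO n m. ?ind b \<rho> \<phi>)"
    if b: "b \<in> SS m" and \<phi>: "\<phi> \<in> PHI n m" for b \<phi>
  proof -
    have b': "m div 2 < b" "b \<le> m" "b \<in> {m div 2 + 1..m}" using b unfolding SS_def by auto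
    have "n * (\<Sum>\<rho>\<in>RHO n m. card (set (qlist t (Wfun n m \<rho> \<phi> b)) \<inter> Col n b))
        = (\<Sum>\<rho>\<in>RHO n m. n * card (set (qlist t (Wfun n m \<rho> \<phi> b)) \<inter> Col n b))"
      by (simp add: sum_distrib_left)
    also have "\<dots> \<le> (\<Sum>\<rho>\<in>RHO n m. 4 * (\<Sum>i\<in>{1..n}. card (?QU (\<rho>(b := i)) \<phi> \<inter> Col n b))
                     + n * (\<Sum>i\<in>{1..n}. ?ind b (\<rho>(b := i)) \<phi>))"
    proof (rule sum_mono)
      fix \<rho> assume h\<rho>: "\<rho> \<in> RHO n m"
      show "n * card (set (qlist t (Wfun n m \<rho> \<phi> b)) \<inter> Col n b) \<le> 4 * (\<Sum>i\<in>{1..n}. card (?QU (\<rho>(b := i)) \<phi> \<inter> Col n b))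
                     + n * (\<Sum>i\<in>{1..n}. ?ind b (\<rho>(b := i)) \<phi>)"
        by (rule P1_local[OF m2 n2 rng[OF h\<rho>] phi[OF \<phi>] b'(1,2)])
    qed
    also have "\<dots> = 4 * (\<Sum>\<rho>\<in>RHO n m. \<Sum>i\<in>{1..n}. card (?QU (\<rho>(b := i)) \<phi> \<inter> Col n b))
                   + n * (\<Sum>\<rho>\<in>RHO n m. \<Sum>i\<in>{1..n}. ?ind b (\<rho>(b := i)) \<phi>)"
      by (simp add: sum.distrib sum_distrib_left)
    also have "\<dots> = 4 * (n * (\<Sum>\<rho>\<in>RHO n m. card (?QU \<rho> \<phi> \<inter> Col n b)))
                   + n * (n * (\<Sum>\<rho>\<in>RHO n m. ?ind b \<rho> \<phi>))"
      using sum_RHO_upd[OF b'(3), of "\<lambda>\<rho>. card (?QU \<rho> \<phi> \<inter> Col n b)" n]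
            sum_RHO_upd[OF b'(3), of "\<lambda>\<rho>. ?ind b \<rho> \<phi>" n] by simp
    also have "\<dots> = n * (4 * (\<Sum>\<rho>\<in>RHO n m. card (?QU \<rho> \<phi> \<inter> Col n b)) + n * (\<Sum>\<rho>\<in>RHO n m. ?ind b \<rho> \<phi>))"
      by (simp add: algebra_simps)
    finally show ?thesis using n2 by (simp add: mult_le_cancel1)
  qed
  have D: "R0 n m * (\<Sum>\<phi>\<in>PHI n m. \<Sum>\<rho>\<in>RHO n m. ?bl u \<rho> \<phi>) \<le> (\<Sum>\<phi>\<in>PHI n m. \<Sum>\<rho>\<in>RHO n m. dt_cost t (Umfun n m \<rho> \<phi> u))"
    if u: "u \<in> IN m" for u
  proof -
    have "R0 n m * (\<Sum>\<phi>\<in>PHI n m. \<Sum>\<rho>\<in>RHO n m. ?bl u \<rho> \<phi>) = (\<Sum>\<rho>\<in>RHO n m. R0 n m * (\<Sum>\<phi>\<in>PHI n m. ?bl u \<rho> \<phi>))"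
      by (subst sum.swap) (simp add: sum_distrib_left)
    also have "\<dots> = (\<Sum>\<rho>\<in>RHO n m. \<Sum>\<phi>\<in>PHI n m. \<Sum>c\<in>Rset n m \<phi> u. ?bl u \<rho> (\<phi>(u := c)))"
    proof (rule sum.cong[OF refl])
      fix \<rho>
      show "R0 n m * (\<Sum>\<phi>\<in>PHI n m. ?bl u \<rho> \<phi>) = (\<Sum>\<phi>\<in>PHI n m. \<Sum>c\<in>Rset n m \<phi> u. ?bl u \<rho> (\<phi>(u := c)))"
        using sum_PHI_upd[OF m2 u, where n=n and F="\<lambda>\<phi>. ?bl u \<rho> \<phi>"] by (simp add: R0_def)
    qed
    also have "\<dots> \<le> (\<Sum>\<rho>\<in>RHO n m. \<Sum>\<phi>\<in>PHI n m. dt_cost t (Umfun n m \<rho> \<phi> u))"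
    proof (intro sum_mono)
      fix \<rho> \<phi> assume h\<rho>: "\<rho> \<in> RHO n m" and h\<phi>: "\<phi> \<in> PHI n m"
      show "(\<Sum>c\<in>Rset n m \<phi> u. ?bl u \<rho> (\<phi>(u := c))) \<le> dt_cost t (Umfun n m \<rho> \<phi> u)"
        by (rule P4_local[OF m2 n2 rng[OF h\<rho>] h\<phi> u])
    qed
    also have "\<dots> = (\<Sum>\<phi>\<in>PHI n m. \<Sum>\<rho>\<in>RHO n m. dt_cost t (Umfun n m \<rho> \<phi> u))"
      by (rule sum.swap)
    finally show ?thesis .
  qed
  have "(\<Sum>b\<in>SS m. \<Sum>\<phi>\<in>PHI n m. \<Sum>\<rho>\<in>RHO n m. card (set (qlist t (Wfun n m \<rho> \<phi> b)) \<inter> Col n b))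
     \<le> (\<Sum>b\<in>SS m. \<Sum>\<phi>\<in>PHI n m. 4 * (\<Sum>\<rho>\<in>RHO n m. card (?QU \<rho> \<phi> \<inter> Col n b)) + n * (\<Sum>\<rho>\<in>RHO n m. ?ind b \<rho> \<phi>))"
    by (intro sum_mono A)
  also have "\<dots> = 4 * (\<Sum>\<phi>\<in>PHI n m. \<Sum>\<rho>\<in>RHO n m. \<Sum>b\<in>SS m. card (?QU \<rho> \<phi> \<inter> Col n b))
                  + n * (\<Sum>b\<in>SS m. \<Sum>\<phi>\<in>PHI n m. \<Sum>\<rho>\<in>RHO n m. ?ind b \<rho> \<phi>)"
  proof -
    have "(\<Sum>b\<in>SS m. \<Sum>\<phi>\<in>PHI n m. \<Sum>\<rho>\<in>RHO n m. card (?QU \<rho> \<phi> \<inter> Col n b))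
        = (\<Sum>\<phi>\<in>PHI n m. \<Sum>\<rho>\<in>RHO n m. \<Sum>b\<in>SS m. card (?QU \<rho> \<phi> \<inter> Col n b))"
      by (subst sum.swap) (simp add: sum.swap[of _ "RHO n m"])
    moreover have "(\<Sum>b\<in>SS m. \<Sum>\<phi>\<in>PHI n m. 4 * (\<Sum>\<rho>\<in>RHO n m. card (?QU \<rho> \<phi> \<inter> Col n b)) + n * (\<Sum>\<rho>\<in>RHO n m. ?ind b \<rho> \<phi>))
      = 4 * (\<Sum>b\<in>SS m. \<Sum>\<phi>\<in>PHI n m. \<Sum>\<rho>\<in>RHO n m. card (?QU \<rho> \<phi> \<inter> Col n b))
        + n * (\<Sum>b\<in>SS m. \<Sum>\<phi>\<in>PHI n m. \<Sum>\<rho>\<in>RHO n m. ?ind b \<rho> \<phi>)"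
      by (simp add: sum.distrib sum_distrib_left)
    ultimately show ?thesis by simp
  qed
  also have "\<dots> \<le> 4 * (\<Sum>\<phi>\<in>PHI n m. \<Sum>\<rho>\<in>RHO n m. dt_cost t (Ufun n m \<rho> \<phi>))
                  + n * (\<Sum>b\<in>SS m. \<Sum>\<phi>\<in>PHI n m. \<Sum>\<rho>\<in>RHO n m. \<Sum>u\<in>{u\<in>IN m. strict_prefix u (T_path m b)}. ?bl u \<rho> \<phi>)"
  proof (intro add_mono mult_le_mono2 sum_mono)
    fix \<phi> \<rho>
    show "(\<Sum>b\<in>SS m. card (?QU \<rho> \<phi> \<inter> Col n b)) \<le> dt_cost t (Ufun n m \<rho> \<phi>)"
      using P2[OF finS, of "qlist t (Ufun n m \<rho> \<phi>)" n] by (simp add: length_qlist)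
  next
    fix b \<phi> \<rho> assume "b \<in> SS m"
    then have "b \<in> {1..m}" unfolding SS_def by auto
    then show "?ind b \<rho> \<phi> \<le> (\<Sum>u\<in>{u\<in>IN m. strict_prefix u (T_path m b)}. ?bl u \<rho> \<phi>)"
      by (rule P3[OF m2])
  qed
  also have "(\<Sum>b\<in>SS m. \<Sum>\<phi>\<in>PHI n m. \<Sum>\<rho>\<in>RHO n m. \<Sum>u\<in>{u\<in>IN m. strict_prefix u (T_path m b)}. ?bl u \<rho> \<phi>)
      = (\<Sum>u\<in>IN m. ww m u * (\<Sum>\<phi>\<in>PHI n m. \<Sum>\<rho>\<in>RHO n m. ?bl u \<rho> \<phi>))"
  proof -
    have "(\<Sum>b\<in>SS m. \<Sum>\<phi>\<in>PHI n m. \<Sum>\<rho>\<in>RHO n m. \<Sum>u\<in>{u\<in>IN m. strict_prefix u (T_path m b)}. ?bl u \<rho> \<phi>)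
        = (\<Sum>b\<in>SS m. \<Sum>u\<in>{u\<in>IN m. strict_prefix u (T_path m b)}. \<Sum>\<phi>\<in>PHI n m. \<Sum>\<rho>\<in>RHO n m. ?bl u \<rho> \<phi>)"
      by (intro sum.cong refl) (simp add: sum.swap[of _ _ "{u\<in>IN m. strict_prefix u (T_path m _)}"] sum.swap[of _ "RHO n m"])
    also have "\<dots> = (\<Sum>u\<in>IN m. \<Sum>b\<in>{b\<in>SS m. strict_prefix u (T_path m b)}. \<Sum>\<phi>\<in>PHI n m. \<Sum>\<rho>\<in>RHO n m. ?bl u \<rho> \<phi>)"
      by (rule sum.swap_restrict[OF finS finI])
    also have "\<dots> = (\<Sum>u\<in>IN m. ww m u * (\<Sum>\<phi>\<in>PHI n m. \<Sum>\<rho>\<in>RHO n m. ?bl u \<rho> \<phi>))"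
      unfolding ww_def by simp
    finally show ?thesis .
  qed
  finally have main: "(\<Sum>b\<in>SS m. \<Sum>\<phi>\<in>PHI n m. \<Sum>\<rho>\<in>RHO n m. card (set (qlist t (Wfun n m \<rho> \<phi> b)) \<inter> Col n b))
     \<le> 4 * (\<Sum>\<phi>\<in>PHI n m. \<Sum>\<rho>\<in>RHO n m. dt_cost t (Ufun n m \<rho> \<phi>))
       + n * (\<Sum>u\<in>IN m. ww m u * (\<Sum>\<phi>\<in>PHI n m. \<Sum>\<rho>\<in>RHO n m. ?bl u \<rho> \<phi>))" .
  have "R0 n m * (\<Sum>u\<in>IN m. ww m u * (\<Sum>\<phi>\<in>PHI n m. \<Sum>\<rho>\<in>RHO n m. ?bl u \<rho> \<phi>))
      = (\<Sum>u\<in>IN m. ww m u * (R0 n m * (\<Sum>\<phi>\<in>PHI n m. \<Sum>\<rho>\<in>RHO n m. ?bl u \<rho> \<phi>)))"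
    by (simp add: sum_distrib_left algebra_simps)
  also have "\<dots> \<le> (\<Sum>u\<in>IN m. ww m u * (\<Sum>\<phi>\<in>PHI n m. \<Sum>\<rho>\<in>RHO n m. dt_cost t (Umfun n m \<rho> \<phi> u)))"
    by (intro sum_mono mult_le_mono2 D)
  finally have E: "R0 n m * (\<Sum>u\<in>IN m. ww m u * (\<Sum>\<phi>\<in>PHI n m. \<Sum>\<rho>\<in>RHO n m. ?bl u \<rho> \<phi>))
      \<le> (\<Sum>u\<in>IN m. ww m u * (\<Sum>\<phi>\<in>PHI n m. \<Sum>\<rho>\<in>RHO n m. dt_cost t (Umfun n m \<rho> \<phi> u)))" .
  have "R0 n m * (\<Sum>b\<in>SS m. \<Sum>\<phi>\<in>PHI n m. \<Sum>\<rho>\<in>RHO n m. card (set (qlist t (Wfun n m \<rho> \<phi> b)) \<inter> Col n b))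
     \<le> R0 n m * (4 * (\<Sum>\<phi>\<in>PHI n m. \<Sum>\<rho>\<in>RHO n m. dt_cost t (Ufun n m \<rho> \<phi>))
       + n * (\<Sum>u\<in>IN m. ww m u * (\<Sum>\<phi>\<in>PHI n m. \<Sum>\<rho>\<in>RHO n m. ?bl u \<rho> \<phi>)))"
    using main by (rule mult_le_mono2)
  also have "\<dots> = 4 * R0 n m * (\<Sum>\<phi>\<in>PHI n m. \<Sum>\<rho>\<in>RHO n m. dt_cost t (Ufun n m \<rho> \<phi>))
       + n * (R0 n m * (\<Sum>u\<in>IN m. ww m u * (\<Sum>\<phi>\<in>PHI n m. \<Sum>\<rho>\<in>RHO n m. ?bl u \<rho> \<phi>)))"
    by (simp add: algebra_simps)
  also have "\<dots> \<le> 4 * R0 n m * (\<Sum>\<phi>\<in>PHI n m. \<Sum>\<rho>\<in>RHO n m. dt_cost t (Ufun n m \<rho> \<phi>))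
       + n * (\<Sum>u\<in>IN m. ww m u * (\<Sum>\<phi>\<in>PHI n m. \<Sum>\<rho>\<in>RHO n m. dt_cost t (Umfun n m \<rho> \<phi> u)))"
    using E by (intro add_left_mono mult_le_mono2)
  finally show ?thesis .
qed



lemma prob_hit:
  assumes D: "rdt_correct (inputs n m) (h1 n m) D" and m2: "m \<ge> 2" and n2: "n \<ge> 2"
    and b: "b \<in> SS m" and \<rho>: "\<rho> \<in> RHO n m" and \<phi>: "\<phi> \<in> PHI n m" and i: "i \<in> {1..n}"
  shows "measure_pmf.prob D {t. (i, b) \<in> set (qlist t (Wfun n m \<rho> \<phi> b))} \<ge> 4/5"
proof -
  let ?W = "Wfun n m \<rho> \<phi> b"
  let ?Y = "Yfun n m \<rho> \<phi> b i"
  have b': "m div 2 < b" "b \<le> m" using b unfolding SS_def by auto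
  have rng: "\<And>j. m div 2 < j \<Longrightarrow> j \<le> m \<Longrightarrow> \<rho> j \<in> {1..n}" using RHO_val \<rho> by blast
  have phi: "inj_on \<phi> (IN m)" "\<phi> ` IN m \<subseteq> C0 n m" using \<phi> unfolding PHI_def by auto
  note ctx = m2 n2 rng phi
  have Yin: "?Y \<in> inputs n m" by (rule Y_in[OF ctx b' i])
  have Win: "?W \<in> inputs n m" by (rule W_in[OF ctx])
  have hY: "h1 n m ?Y" by (rule Y_h1[OF ctx b' i])
  have hW: "\<not> h1 n m ?W" by (rule W_not_h1[OF ctx b'])
  let ?A = "{t. dt_eval t ?Y = h1 n m ?Y}"
  let ?B = "{t. dt_eval t ?W = h1 n m ?W}"
  let ?Q = "{t. (i, b) \<in> set (qlist t ?W)}"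
  have pA: "measure_pmf.prob D ?A \<ge> 9/10" using D Yin unfolding rdt_correct_def by blast
  have pB: "measure_pmf.prob D ?B \<ge> 9/10" using D Win unfolding rdt_correct_def by blast
  have sub: "UNIV - ?Q \<subseteq> (UNIV - ?A) \<union> (UNIV - ?B)"
  proof
    fix t assume "t \<in> UNIV - ?Q"
    then have nq: "set (qlist t ?W) \<inter> {(i, b)} = {}" by auto
    have "dt_eval t ?W = dt_eval t ?Y"
      by (rule agree_eval[OF _ nq]) (simp add: Yfun_def)
    then show "t \<in> (UNIV - ?A) \<union> (UNIV - ?B)" using hY hW by auto
  qed
  have "measure_pmf.prob D (UNIV - ?Q) \<le> measure_pmf.prob D ((UNIV - ?A) \<union> (UNIV - ?B))"
    using sub by (intro measure_pmf.finite_measure_mono) auto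
  also have "\<dots> \<le> measure_pmf.prob D (UNIV - ?A) + measure_pmf.prob D (UNIV - ?B)"
    by (rule measure_Un_le) auto
  also have "\<dots> = (1 - measure_pmf.prob D ?A) + (1 - measure_pmf.prob D ?B)"
    using measure_pmf.prob_compl[of ?A D] measure_pmf.prob_compl[of ?B D] by simp
  finally have "measure_pmf.prob D (UNIV - ?Q) \<le> (1 - measure_pmf.prob D ?A) + (1 - measure_pmf.prob D ?B)" .
  moreover have "measure_pmf.prob D (UNIV - ?Q) = 1 - measure_pmf.prob D ?Q"
    using measure_pmf.prob_compl[of ?Q D] by simp
  ultimately show ?thesis using pA pB by linarith
qed

lemma nnI_of_nat_mono:
  "(\<And>t. f t \<le> g t) \<Longrightarrow> (\<integral>\<^sup>+ t. (of_nat (f t) :: ennreal) \<partial>measure_pmf D) \<le> (\<integral>\<^sup>+ t. of_nat (g t) \<partial>measure_pmf D)"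
  by (intro nn_integral_mono) simp

lemma nnI_sum:
  "(\<integral>\<^sup>+ t. (of_nat (\<Sum>i\<in>I. f i t) :: ennreal) \<partial>measure_pmf D) = (\<Sum>i\<in>I. \<integral>\<^sup>+ t. of_nat (f i t) \<partial>measure_pmf D)"
  by (simp add: of_nat_sum nn_integral_sum)

lemma nnI_add:
  "(\<integral>\<^sup>+ t. (of_nat (f t + g t) :: ennreal) \<partial>measure_pmf D)
   = (\<integral>\<^sup>+ t. of_nat (f t) \<partial>measure_pmf D) + (\<integral>\<^sup>+ t. of_nat (g t) \<partial>measure_pmf D)"
  by (simp add: nn_integral_add)

lemma nnI_cmult:
  "(\<integral>\<^sup>+ t. (of_nat (c * f t) :: ennreal) \<partial>measure_pmf D) = of_nat c * (\<integral>\<^sup>+ t. of_nat (f t) \<partial>measure_pmf D)"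
  by (simp add: nn_integral_cmult)

lemma hit_integral:
  assumes D: "rdt_correct (inputs n m) (h1 n m) D" and m2: "m \<ge> 2" and n2: "n \<ge> 2"
    and b: "b \<in> SS m" and \<rho>: "\<rho> \<in> RHO n m" and \<phi>: "\<phi> \<in> PHI n m"
  shows "ennreal (4/5 * n) \<le> (\<integral>\<^sup>+ t. of_nat (card (set (qlist t (Wfun n m \<rho> \<phi> b)) \<inter> Col n b)) \<partial>measure_pmf D)"
proof -
  have "(\<integral>\<^sup>+ t. (of_nat (card (set (qlist t (Wfun n m \<rho> \<phi> b)) \<inter> Col n b)) :: ennreal) \<partial>measure_pmf D)
      = (\<integral>\<^sup>+ t. of_nat (\<Sum>i\<in>{1..n}. (of_bool ((i, b) \<in> set (qlist t (Wfun n m \<rho> \<phi> b)) \<inter> Col n b) :: nat)) \<partial>measure_pmf D)"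
    by (subst sum_ind_Col) auto
  also have "\<dots> = (\<Sum>i\<in>{1..n}. \<integral>\<^sup>+ t. of_nat (of_bool ((i, b) \<in> set (qlist t (Wfun n m \<rho> \<phi> b)) \<inter> Col n b) :: nat) \<partial>measure_pmf D)"
    by (rule nnI_sum)
  also have "\<dots> = (\<Sum>i\<in>{1..n}. ennreal (measure_pmf.prob D {t. (i, b) \<in> set (qlist t (Wfun n m \<rho> \<phi> b))}))"
  proof (rule sum.cong[OF refl])
    fix i assume i: "i \<in> {1..n}"
    have "(\<lambda>t. (of_nat (of_bool ((i, b) \<in> set (qlist t (Wfun n m \<rho> \<phi> b)) \<inter> Col n b) :: nat) :: ennreal))
        = indicator {t. (i, b) \<in> set (qlist t (Wfun n m \<rho> \<phi> b))}"
      using i by (auto simp: Col_def indicator_def fun_eq_iff)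
    then show "(\<integral>\<^sup>+ t. of_nat (of_bool ((i, b) \<in> set (qlist t (Wfun n m \<rho> \<phi> b)) \<inter> Col n b) :: nat) \<partial>measure_pmf D)
        = ennreal (measure_pmf.prob D {t. (i, b) \<in> set (qlist t (Wfun n m \<rho> \<phi> b))})"
      by (simp add: measure_pmf.emeasure_eq_measure)
  qed
  also have "\<dots> \<ge> (\<Sum>i\<in>{1..n}. ennreal (4/5))"
    by (intro sum_mono ennreal_leI prob_hit[OF D m2 n2 b \<rho> \<phi>])
  finally show ?thesis by (simp add: ennreal_of_nat_eq_real_of_nat ennreal_mult'[symmetric] mult.commute)
qed



lemma card_strict_prefixes: "card {u \<in> A. strict_prefix u p} \<le> length p"
proof -
  have "{u \<in> A. strict_prefix u p} \<subseteq> (\<lambda>k. take k p) ` {..<length p}"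
  proof
    fix u assume "u \<in> {u \<in> A. strict_prefix u p}"
    then have "strict_prefix u p" by simp
    then obtain k where "u = take k p" "k < length p"
      by (metis prefix_length_less prefix_order.less_imp_le prefix_def append_eq_conv_conj)
    then show "u \<in> (\<lambda>k. take k p) ` {..<length p}" by auto
  qed
  then have "card {u \<in> A. strict_prefix u p} \<le> card ((\<lambda>k. take k p) ` {..<length p})"
    by (rule card_mono[rotated]) simp
  also have "\<dots> \<le> card {..<length p}" by (rule card_image_le) simp
  finally show ?thesis by simp
qed

lemma sum_ww:
  assumes m2: "m \<ge> 2" and r: "\<forall>j\<in>{1..m}. length (T_path m j) \<le> Suc r"
  shows "(\<Sum>u\<in>IN m. ww m u) \<le> card (SS m) * Suc r"
proof -
  have finS: "finite (SS m)" unfolding SS_def by simp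
  have "(\<Sum>u\<in>IN m. ww m u) = (\<Sum>u\<in>IN m. \<Sum>b\<in>{b\<in>SS m. strict_prefix u (T_path m b)}. (1::nat))"
    unfolding ww_def by simp
  also have "\<dots> = (\<Sum>b\<in>SS m. \<Sum>u\<in>{u\<in>IN m. strict_prefix u (T_path m b)}. (1::nat))"
    by (rule sum.swap_restrict[symmetric, OF finS finite_IN[OF m2]])
  also have "\<dots> = (\<Sum>b\<in>SS m. card {u\<in>IN m. strict_prefix u (T_path m b)})" by simp
  also have "\<dots> \<le> (\<Sum>b\<in>SS m. Suc r)"
  proof (rule sum_mono)
    fix b assume "b \<in> SS m"
    then have "b \<in> {1..m}" unfolding SS_def by auto
    then show "card {u\<in>IN m. strict_prefix u (T_path m b)} \<le> Suc r"
      using card_strict_prefixes[of "IN m" "T_path m b"] r by fastforce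
  qed
  finally show ?thesis by simp
qed

lemma card_C0: "card (C0 n m) = (n - 1) * (m div 2)"
  unfolding C0_def by (simp add: card_cartesian_product)

lemma PHI_ne:
  assumes m2: "m \<ge> 2" and n: "n \<ge> 3"
  shows "PHI n m \<noteq> {}"
proof -
  have "card (IN m) \<le> card (C0 n m)"
  proof -
    have "card (IN m) \<le> m - 1" by (rule card_IN[OF m2])
    also have "m - 1 \<le> 2 * (m div 2)" by linarith
    also have "2 * (m div 2) \<le> (n - 1) * (m div 2)" using n by (intro mult_right_mono) auto
    finally show ?thesis by (simp add: card_C0)
  qed
  then obtain f where f: "f ` IN m \<subseteq> C0 n m" "inj_on f (IN m)"
    using card_le_inj[OF finite_IN[OF m2] finite_C0] by blast
  have "restrict f (IN m) \<in> PHI n m"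
    unfolding PHI_def using f by (auto simp: inj_on_def)
  then show ?thesis by blast
qed

lemma RHO_ne: "n \<ge> 1 \<Longrightarrow> RHO n m \<noteq> {}"
  unfolding RHO_def by (auto simp: PiE_eq_empty_iff)

lemma cost_le:
  assumes "x \<in> inputs n m"
  shows "(\<integral>\<^sup>+ t. (of_nat (dt_cost t x) :: ennreal) \<partial>measure_pmf D) \<le> rdt_cost (inputs n m) D"
  unfolding rdt_cost_def using assms
  by (auto intro!: SUP_upper2 simp: ennreal_of_nat_eq_real_of_nat)

lemma main_bound:
  assumes D: "rdt_correct (inputs n m) (h1 n m) D" and m2: "m \<ge> 2" and n3: "n \<ge> 3"
  shows "of_nat (card (SS m)) * of_nat (R0 n m) * ennreal (4/5 * n)
    \<le> (of_nat (4 * R0 n m) + of_nat n * of_nat (\<Sum>u\<in>IN m. ww m u)) * rdt_cost (inputs n m) D"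
proof -
  have n2: "n \<ge> 2" using n3 by simp
  let ?K = "rdt_cost (inputs n m) D"
  let ?P = "PHI n m" and ?R = "RHO n m"
  let ?N = "card ?P * card ?R"
  let ?I = "\<lambda>f. (\<integral>\<^sup>+ t. (of_nat (f t) :: ennreal) \<partial>measure_pmf D)"
  have rng: "\<And>j. m div 2 < j \<Longrightarrow> j \<le> m \<Longrightarrow> \<rho> j \<in> {1..n}" if "\<rho> \<in> RHO n m" for \<rho>
    using RHO_val that by blast
  have phi: "inj_on \<phi> (IN m)" "\<phi> ` IN m \<subseteq> C0 n m" if "\<phi> \<in> PHI n m" for \<phi>
    using that unfolding PHI_def by auto
  have int: "?I (\<lambda>t. R0 n m * (\<Sum>b\<in>SS m. \<Sum>\<phi>\<in>?P. \<Sum>\<rho>\<in>?R. card (set (qlist t (Wfun n m \<rho> \<phi> b)) \<inter> Col n b)))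
      \<le> ?I (\<lambda>t. 4 * R0 n m * (\<Sum>\<phi>\<in>?P. \<Sum>\<rho>\<in>?R. dt_cost t (Ufun n m \<rho> \<phi>))
      + n * (\<Sum>u\<in>IN m. ww m u * (\<Sum>\<phi>\<in>?P. \<Sum>\<rho>\<in>?R. dt_cost t (Umfun n m \<rho> \<phi> u))))"
    by (rule nnI_of_nat_mono, rule per_tree[OF m2 n2])
  have lhs: "?I (\<lambda>t. R0 n m * (\<Sum>b\<in>SS m. \<Sum>\<phi>\<in>?P. \<Sum>\<rho>\<in>?R. card (set (qlist t (Wfun n m \<rho> \<phi> b)) \<inter> Col n b)))
      \<ge> of_nat (R0 n m) * (\<Sum>b\<in>SS m. \<Sum>\<phi>\<in>?P. \<Sum>\<rho>\<in>?R. ennreal (4/5 * n))"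
  proof -
    have "?I (\<lambda>t. R0 n m * (\<Sum>b\<in>SS m. \<Sum>\<phi>\<in>?P. \<Sum>\<rho>\<in>?R. card (set (qlist t (Wfun n m \<rho> \<phi> b)) \<inter> Col n b)))
      = of_nat (R0 n m) * (\<Sum>b\<in>SS m. \<Sum>\<phi>\<in>?P. \<Sum>\<rho>\<in>?R. ?I (\<lambda>t. card (set (qlist t (Wfun n m \<rho> \<phi> b)) \<inter> Col n b)))"
      by (simp only: nnI_cmult nnI_sum)
    moreover have "(\<Sum>b\<in>SS m. \<Sum>\<phi>\<in>?P. \<Sum>\<rho>\<in>?R. ennreal (4/5 * n))
        \<le> (\<Sum>b\<in>SS m. \<Sum>\<phi>\<in>?P. \<Sum>\<rho>\<in>?R. ?I (\<lambda>t. card (set (qlist t (Wfun n m \<rho> \<phi> b)) \<inter> Col n b)))"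
      by (intro sum_mono hit_integral[OF D m2 n2])
    ultimately show ?thesis by (simp add: mult_left_mono)
  qed
  have rhs: "?I (\<lambda>t. 4 * R0 n m * (\<Sum>\<phi>\<in>?P. \<Sum>\<rho>\<in>?R. dt_cost t (Ufun n m \<rho> \<phi>))
      + n * (\<Sum>u\<in>IN m. ww m u * (\<Sum>\<phi>\<in>?P. \<Sum>\<rho>\<in>?R. dt_cost t (Umfun n m \<rho> \<phi> u))))
    \<le> of_nat (4 * R0 n m) * (\<Sum>\<phi>\<in>?P. \<Sum>\<rho>\<in>?R. ?K)
      + of_nat n * (\<Sum>u\<in>IN m. of_nat (ww m u) * (\<Sum>\<phi>\<in>?P. \<Sum>\<rho>\<in>?R. ?K))"
  proof -
    have "?I (\<lambda>t. 4 * R0 n m * (\<Sum>\<phi>\<in>?P. \<Sum>\<rho>\<in>?R. dt_cost t (Ufun n m \<rho> \<phi>))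
      + n * (\<Sum>u\<in>IN m. ww m u * (\<Sum>\<phi>\<in>?P. \<Sum>\<rho>\<in>?R. dt_cost t (Umfun n m \<rho> \<phi> u))))
      = of_nat (4 * R0 n m) * (\<Sum>\<phi>\<in>?P. \<Sum>\<rho>\<in>?R. ?I (\<lambda>t. dt_cost t (Ufun n m \<rho> \<phi>)))
      + of_nat n * (\<Sum>u\<in>IN m. of_nat (ww m u) * (\<Sum>\<phi>\<in>?P. \<Sum>\<rho>\<in>?R. ?I (\<lambda>t. dt_cost t (Umfun n m \<rho> \<phi> u))))"
      by (simp only: nnI_add nnI_cmult nnI_sum)
    also have "\<dots> \<le> of_nat (4 * R0 n m) * (\<Sum>\<phi>\<in>?P. \<Sum>\<rho>\<in>?R. ?K)
      + of_nat n * (\<Sum>u\<in>IN m. of_nat (ww m u) * (\<Sum>\<phi>\<in>?P. \<Sum>\<rho>\<in>?R. ?K))"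
    proof (intro add_mono mult_left_mono sum_mono)
      fix \<phi> \<rho> assume "\<phi> \<in> ?P" "\<rho> \<in> ?R"
      then show "?I (\<lambda>t. dt_cost t (Ufun n m \<rho> \<phi>)) \<le> ?K"
        by (intro cost_le U_in[OF m2 n2 rng phi])
    next
      fix u \<phi> \<rho> assume "\<phi> \<in> ?P" "\<rho> \<in> ?R"
      then show "?I (\<lambda>t. dt_cost t (Umfun n m \<rho> \<phi> u)) \<le> ?K"
        by (intro cost_le Um_in[OF m2 n2 rng phi])
    qed auto
    finally show ?thesis .
  qed
  have eqL: "of_nat (R0 n m) * (\<Sum>b\<in>SS m. \<Sum>\<phi>\<in>?P. \<Sum>\<rho>\<in>?R. ennreal (4/5 * n))
     = of_nat ?N * (of_nat (card (SS m)) * of_nat (R0 n m) * ennreal (4/5 * n))"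
    by (simp add: algebra_simps)
  have eqR: "of_nat (4 * R0 n m) * (\<Sum>\<phi>\<in>?P. \<Sum>\<rho>\<in>?R. ?K)
      + of_nat n * (\<Sum>u\<in>IN m. of_nat (ww m u) * (\<Sum>\<phi>\<in>?P. \<Sum>\<rho>\<in>?R. ?K))
     = of_nat ?N * ((of_nat (4 * R0 n m) + of_nat n * of_nat (\<Sum>u\<in>IN m. ww m u)) * ?K)"
    by (simp add: algebra_simps sum_distrib_left sum_distrib_right of_nat_sum)
  have "of_nat ?N * (of_nat (card (SS m)) * of_nat (R0 n m) * ennreal (4/5 * n))
      \<le> of_nat ?N * ((of_nat (4 * R0 n m) + of_nat n * of_nat (\<Sum>u\<in>IN m. ww m u)) * ?K)"
    using lhs int rhs unfolding eqL eqR by (meson order_trans)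
  moreover have "(of_nat ?N :: ennreal) \<noteq> 0"
    using PHI_ne[OF m2 n3] RHO_ne[of n m] n3 finite_PHI[OF m2] finite_RHO by simp
  moreover have "(of_nat ?N :: ennreal) \<noteq> top" by (rule ennreal_of_nat_neq_top)
  ultimately show ?thesis by (simp add: ennreal_mult_le_mult_iff)
qed



lemma ln2_ge: "ln (2::real) \<ge> 1/2"
proof -
  have "ln (1 - 1/2 :: real) \<le> - (1/2)" by (rule ln_one_minus_pos_upper_bound) auto
  moreover have "ln (1 - 1/2 :: real) = - ln 2" by (simp add: ln_div)
  ultimately show ?thesis by simp
qed

lemma arith_final:
  fixes n m S R W k r lnm :: real
  assumes n: "n \<ge> 12" and m: "m \<ge> 12" and S: "2 * S \<ge> m" "S \<le> m" and R: "4 * R \<ge> n * m"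
    and W: "W \<le> S * (r + 1)" and W0: "W \<ge> 0" and k: "k \<ge> 0" and r: "r \<ge> 0" and rl: "r + 2 \<le> 4 * lnm"
    and main: "4/5 * n * S * R \<le> (4 * R + n * W) * k"
  shows "n * m / (40 * lnm) \<le> k"
proof -
  have Rpos: "R > 0" using R n m by (smt (verit) mult_pos_pos)
  have lnpos: "lnm > 0" using rl r by linarith
  have "n * W \<le> n * (S * (r + 1))" using W n by (intro mult_left_mono) auto
  also have "\<dots> \<le> n * (m * (r + 1))" using S r n by (intro mult_left_mono mult_right_mono) auto
  also have "\<dots> = (n * m) * (r + 1)" by simp
  also have "\<dots> \<le> (4 * R) * (r + 1)" using R r by (intro mult_right_mono) auto
  finally have nW: "n * W \<le> 4 * R * (r + 1)" .
  have "(4 * R + n * W) * k \<le> (4 * R * (r + 2)) * k"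
    using nW k by (intro mult_right_mono) (auto simp: algebra_simps)
  with main have "4/5 * n * S * R \<le> (4 * R * (r + 2)) * k" by linarith
  then have "R * (4/5 * n * S) \<le> R * (4 * (r + 2) * k)" by (simp add: algebra_simps)
  then have "4/5 * n * S \<le> 4 * (r + 2) * k" using Rpos by (simp add: mult_le_cancel_left_pos)
  then have "4 * (n * S) \<le> 4 * (5 * (r + 2) * k)" by (simp add: algebra_simps)
  then have nS: "n * S \<le> 5 * (r + 2) * k" by linarith
  have "n * m \<le> 2 * (n * S)" using S n by (simp add: algebra_simps)
  also have "\<dots> \<le> 10 * ((r + 2) * k)" using nS by (simp add: algebra_simps)
  also have "\<dots> \<le> 10 * ((4 * lnm) * k)" using rl k by (intro mult_left_mono mult_right_mono) auto
  finally have "n * m \<le> k * (40 * lnm)" by (simp add: algebra_simps)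
  then show ?thesis using lnpos by (simp add: divide_le_eq)
qed


lemma ln_bounds:
  fixes m r :: nat
  assumes m: "m \<ge> 4" and r: "2 ^ r \<le> m"
  shows "real r + 2 \<le> 4 * ln (real m)"
proof -
  have "ln (real (2 ^ r)) \<le> ln (real m)" using r m by (subst ln_le_cancel_iff) auto
  moreover have "ln (real (2 ^ r)) = real r * ln 2" by (simp add: ln_realpow)
  ultimately have a: "real r * ln 2 \<le> ln (real m)" by simp
  have "real r * (1/2) \<le> real r * ln 2" using ln2_ge by (intro mult_left_mono) auto
  with a have a': "real r \<le> 2 * ln (real m)" by simp
  have "ln (4::real) \<le> ln (real m)" using m by (subst ln_le_cancel_iff) auto
  moreover have "ln (4::real) = 2 * ln 2"
    using ln_realpow[of 2 2] by simp
  ultimately have "1 \<le> ln (real m)" using ln2_ge by simp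
  with a' show ?thesis by simp
qed

lemma final_bound:
  assumes D: "rdt_correct (inputs n m) (h1 n m) D" and n: "12 \<le> n" and m: "12 \<le> m"
  shows "ennreal (1/40 * real n * real m / ln (real m)) \<le> rdt_cost (inputs n m) D"
proof -
  have m2: "m \<ge> 2" and n3: "n \<ge> 3" using n m by auto
  obtain r where r: "2 ^ r \<le> m" "\<forall>j\<in>{1..m}. length (T_path m j) \<le> Suc r"
    using depth_bound[OF m2] by blast
  let ?S = "card (SS m)" and ?R = "R0 n m" and ?W = "\<Sum>u\<in>IN m. ww m u"
  have Wb: "?W \<le> ?S * Suc r" by (rule sum_ww[OF m2 r(2)])
  have mb: "of_nat ?S * of_nat ?R * ennreal (4/5 * n)
    \<le> (of_nat (4 * ?R) + of_nat n * of_nat ?W) * rdt_cost (inputs n m) D"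
    by (rule main_bound[OF D m2 n3])
  have cS: "?S = m - m div 2" unfolding SS_def by simp
  have S1: "2 * real ?S \<ge> real m" "real ?S \<le> real m" unfolding cS by linarith+
  have R1: "4 * real ?R \<ge> real n * real m"
  proof -
    have ci: "card (IN m) - 1 \<le> m - 2" using card_IN[OF m2] by simp
    have "?R \<ge> (n - 1) * (m div 2) - (m - 2)" unfolding R0_def card_C0 using ci by (simp add: diff_le_mono2)
    moreover have "(n - 1) * (m div 2) \<ge> m - 2"
    proof -
      have "(n - 1) * (m div 2) \<ge> 2 * (m div 2)" using n by (intro mult_right_mono) auto
      then show ?thesis by linarith
    qed
    ultimately have "real ?R \<ge> real ((n - 1) * (m div 2)) - real (m - 2)" by linarith
    moreover have "real ((n - 1) * (m div 2)) = (real n - 1) * real (m div 2)" using n by (simp add: of_nat_diff)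
    moreover have "real (m - 2) = real m - 2" using m by (simp add: of_nat_diff)
    moreover have "2 * real (m div 2) \<ge> real m - 1" by linarith
    ultimately have "real ?R \<ge> (real n - 1) * real (m div 2) - (real m - 2)" by simp
    moreover have "(real n - 1) * (2 * real (m div 2)) \<ge> (real n - 1) * (real m - 1)"
      using \<open>2 * real (m div 2) \<ge> real m - 1\<close> n by (intro mult_left_mono) auto
    ultimately have "2 * real ?R \<ge> (real n - 1) * (real m - 1) - 2 * (real m - 2)" by (simp add: algebra_simps)
    moreover have "real n * real m \<ge> 12 * real m" using n by (intro mult_right_mono) auto
    moreover have "real n * real m \<ge> real n * 12" using m by (intro mult_left_mono) auto
    ultimately show ?thesis by (simp add: algebra_simps)
  qed
  have W1: "real ?W \<le> real ?S * (real r + 1)" using Wb by (metis of_nat_le_iff of_nat_mult of_nat_Suc add.commute)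
  have rl: "real r + 2 \<le> 4 * ln (real m)" by (rule ln_bounds) (use m r in auto)
  show ?thesis
  proof (cases "rdt_cost (inputs n m) D" rule: ennreal_cases)
    case (real k)
    have E: "ennreal (real ?S * real ?R * (4/5 * n)) \<le> ennreal ((4 * real ?R + real n * real ?W) * k)"
    proof -
      have eqR: "(ennreal (4 * real ?R) + ennreal (real n) * ennreal (\<Sum>x\<in>IN m. real (ww m x))) * ennreal k
          = ennreal ((4 * real ?R + real n * (\<Sum>x\<in>IN m. real (ww m x))) * k)"
        using real(1) by (simp add: ennreal_mult ennreal_plus sum_nonneg)
      show ?thesis using mb real apply (simp add: ennreal_of_nat_eq_real_of_nat ennreal_mult[symmetric] ennreal_plus[symmetric])
        using eqR by simp
    qed
    have nn: "0 \<le> (4 * real ?R + real n * real ?W) * k" using real(1) by (intro mult_nonneg_nonneg add_nonneg_nonneg) (auto intro: sum_nonneg)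
    have main0: "real ?S * real ?R * (4/5 * n) \<le> (4 * real ?R + real n * real ?W) * k"
      using iffD1[OF ennreal_le_iff[OF nn] E] .
    then have main: "4/5 * real n * real ?S * real ?R \<le> (4 * real ?R + real n * real ?W) * k"
      by (simp add: algebra_simps)
    have "real n * real m / (40 * ln (real m)) \<le> k"
      by (rule arith_final[OF _ _ S1 R1 W1 _ real(1) _ rl main]) (use n m in \<open>simp_all add: sum_nonneg\<close>)
    moreover have "1/40 * real n * real m / ln (real m) = real n * real m / (40 * ln (real m))" by simp
    ultimately have "1/40 * real n * real m / ln (real m) \<le> k" by simp
    then show ?thesis unfolding real(2) by (rule ennreal_leI)
  qed simp
qed


theorem theorem17:
  shows "\<exists>c::real. c > 0 \<and> (\<exists>N::nat. \<forall>n m. N \<le> n \<and> N \<le> m \<longrightarrow>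
           R_query (inputs n m) (h1 n m) \<ge> ennreal (c * real n * real m / ln (real m)))"
proof (intro exI[of _ "1/40"] conjI exI[of _ 12] allI impI)
  fix n m :: nat assume nm: "12 \<le> n \<and> 12 \<le> m"
  show "R_query (inputs n m) (h1 n m) \<ge> ennreal (1/40 * real n * real m / ln (real m))"
    unfolding R_query_def
  proof (rule INF_greatest)
    fix D assume "D \<in> {D. rdt_correct (inputs n m) (h1 n m) D}"
    then show "ennreal (1/40 * real n * real m / ln (real m)) \<le> rdt_cost (inputs n m) D"
      using final_bound[of n m D] nm by simp
  qed
qed simp

end
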